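(* Let $A,B:(0,\infty)\to(0,\infty)$ be the functions $A=\tfrac r3\sqrt{1-r^{-3}}$, $B=\tfrac r{\sqrt3}$, where $r=r(t)\in(1,\infty)$ is determined by $\dot A=\tfrac12(1-A^2/B^2)$, $\dot B=A/B$ with $r\to1$ as $t\to0$. Consider the ODE system $$\dot f_+=\frac{f_+}{A}\Bigl(1-\frac{A^2}{B^2}-f_+\Bigr)+f_-^2\frac{A}{B^2},\qquad \dot f_-=\frac{2f_-}{A}(f_+-1).$$ If a solution $(f_+,f_-)$ lies in $\mathcal{R}_0=\{\tfrac23<f_+<1,\ 0<f_-<1\}$ at some time $t_0>0$, then it exists for all $t\ge t_0$ and converges to $(\tfrac23,0)$, with $$f_+=\tfrac23+\mu t^{-2}+O(t^{-3}),\qquad f_-=\nu t^{-2}+O(t^{-3})\qquad (t\to\infty)$$ for some non-zero real numbers $\mu,\nu$.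
   Context: $A$ and $B$ are the metric coefficients of the Bryant–Salamon $G_2$-metric on $\mathbf{S}(S^3)$; the system is the $\mathrm{SU}(2)^3$-invariant $G_2$-instanton equation for $\mathrm{SU}(2)$-connections $f_+\sum_iE_i\otimes e_i^++f_-\sum_iE_i\otimes e_i^-$, and $(\tfrac23,0)$ corresponds to the nearly-Kähler instanton $A^{nK}$. *)

theory Defs
  imports Complex_Main "HOL-Library.Landau_Symbols"
begin

definition fplus_rhs :: "real \<Rightarrow> real \<Rightarrow> real \<Rightarrow> real \<Rightarrow> real" where
  "fplus_rhs a b fp fm = fp / a * (1 - a\<^sup>2 / b\<^sup>2 - fp) + fm\<^sup>2 * a / b\<^sup>2"

definition fminus_rhs :: "real \<Rightarrow> real \<Rightarrow> real \<Rightarrow> real \<Rightarrow> real" where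
  "fminus_rhs a b fp fm = 2 * fm / a * (fp - 1)"

definition instanton_sol ::
  "(real \<Rightarrow> real) \<Rightarrow> (real \<Rightarrow> real) \<Rightarrow> (real \<Rightarrow> real) \<Rightarrow> (real \<Rightarrow> real) \<Rightarrow> real set \<Rightarrow> bool" where
  "instanton_sol A B fp fm I \<longleftrightarrow>
     (\<forall>t\<in>I. (fp has_real_derivative fplus_rhs (A t) (B t) (fp t) (fm t)) (at t within I) \<and>
             (fm has_real_derivative fminus_rhs (A t) (B t) (fp t) (fm t)) (at t within I))"

end

theory Submission
  imports Defs "HOL-Analysis.Henstock_Kurzweil_Integration"
begin


lemma int_deriv_from:
  fixes g :: "real \<Rightarrow> real"
  assumes "continuous_on {a..} g" "t \<ge> a"
  shows "((\<lambda>x. integral {a..x} g) has_real_derivative g t) (at t within {a..})"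
proof -
  have c: "continuous_on {a..t+1} g" using assms(1) by (rule continuous_on_subset) auto
  have d: "((\<lambda>x. integral {a..x} g) has_real_derivative g t) (at t within {a..t+1})"
    by (rule integral_has_real_derivative[OF c]) (use assms in auto)
  have "at t within {a..t+1} = at t within {a..}"
    by (rule at_within_nhd[where S="{..<t+1}"]) auto
  with d show ?thesis by simp
qed

lemma int_cont_from:
  fixes g :: "real \<Rightarrow> real"
  assumes "continuous_on {a..} g"
  shows "continuous_on {a..} (\<lambda>x. integral {a..x} g)"
  unfolding continuous_on_eq_continuous_within
  using int_deriv_from[OF assms] DERIV_continuous by fastforce

lemma lip_cont:
  fixes f :: "real \<Rightarrow> real"
  assumes "\<And>s t. s \<in> S \<Longrightarrow> t \<in> S \<Longrightarrow> \<bar>f t - f s\<bar> \<le> K * \<bar>t - s\<bar>" "K \<ge> 0"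
  shows "continuous_on S f"
  unfolding continuous_on_iff
proof (intro ballI allI impI)
  fix x e :: real assume x: "x \<in> S" and e: "0 < e"
  show "\<exists>d>0. \<forall>x'\<in>S. dist x' x < d \<longrightarrow> dist (f x') (f x) < e"
  proof (intro exI[of _ "e/(K+1)"] conjI ballI impI)
    show "0 < e/(K+1)" using e assms(2) by simp
    fix x' assume x': "x' \<in> S" and d: "dist x' x < e/(K+1)"
    have "\<bar>f x' - f x\<bar> \<le> K * \<bar>x' - x\<bar>" using assms(1)[OF x x'] .
    also have "\<dots> \<le> K * (e/(K+1))" using d assms(2) by (intro mult_left_mono) (auto simp: dist_real_def)
    also have "\<dots> < e" using e assms(2) by (simp add: field_simps)
    finally show "dist (f x') (f x) < e" by (simp add: dist_real_def)
  qed
qed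

lemma int_poly:
  fixes a t K :: real
  assumes "a \<le> t"
  shows "integral {a..t} (\<lambda>s. K * (s - a) ^ n) = K * (t - a) ^ Suc n / Suc n"
proof -
  have "((\<lambda>s. K * (s - a) ^ n) has_integral ((\<lambda>s. K * (s - a) ^ Suc n / Suc n) t - (\<lambda>s. K * (s - a) ^ Suc n / Suc n) a)) {a..t}"
    apply (rule fundamental_theorem_of_calculus[OF assms])
    apply (unfold has_real_derivative_iff_has_vector_derivative[symmetric])
    apply (rule derivative_eq_intros refl | simp)+
    done
  then have "integral {a..t} (\<lambda>s. K * (s - a) ^ n) = K * (t - a) ^ Suc n / Suc n - K * (a - a) ^ Suc n / Suc n"
    by (rule integral_unique)
  then show ?thesis by simp
qed

lemma integral_point_zero [simp]: "integral {a..a::real} (f :: real \<Rightarrow> real) = 0"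
  by simp

primrec picard :: "(real\<Rightarrow>real\<Rightarrow>real\<Rightarrow>real) \<Rightarrow> (real\<Rightarrow>real\<Rightarrow>real\<Rightarrow>real) \<Rightarrow> real \<Rightarrow> real \<Rightarrow> real \<Rightarrow> nat \<Rightarrow> real \<Rightarrow> real \<times> real" where
  "picard G1 G2 a y1 y2 0 = (\<lambda>t. (y1, y2))"
| "picard G1 G2 a y1 y2 (Suc n) = (\<lambda>t. (y1 + integral {a..t} (\<lambda>s. G1 s (fst (picard G1 G2 a y1 y2 n s)) (snd (picard G1 G2 a y1 y2 n s))),
                                         y2 + integral {a..t} (\<lambda>s. G2 s (fst (picard G1 G2 a y1 y2 n s)) (snd (picard G1 G2 a y1 y2 n s)))))"

lemma picard_exists:
  fixes G1 G2 :: "real \<Rightarrow> real \<Rightarrow> real \<Rightarrow> real" and a y1 y2 M L :: real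
  assumes cont: "\<And>\<phi> \<psi>. continuous_on {a..} \<phi> \<Longrightarrow> continuous_on {a..} \<psi> \<Longrightarrow>
        continuous_on {a..} (\<lambda>s. G1 s (\<phi> s) (\<psi> s)) \<and> continuous_on {a..} (\<lambda>s. G2 s (\<phi> s) (\<psi> s))"
    and bnd: "\<And>s u v. s \<ge> a \<Longrightarrow> \<bar>G1 s u v\<bar> \<le> M \<and> \<bar>G2 s u v\<bar> \<le> M"
    and lip: "\<And>s u v u' v'. s \<ge> a \<Longrightarrow> \<bar>G1 s u v - G1 s u' v'\<bar> + \<bar>G2 s u v - G2 s u' v'\<bar> \<le> L * (\<bar>u - u'\<bar> + \<bar>v - v'\<bar>)"
    and L0: "L \<ge> 0"
  shows "\<exists>\<phi> \<psi>. \<phi> a = y1 \<and> \<psi> a = y2 \<and> (\<forall>t\<ge>a. (\<phi> has_real_derivative G1 t (\<phi> t) (\<psi> t)) (at t within {a..}) \<and>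
                 (\<psi> has_real_derivative G2 t (\<phi> t) (\<psi> t)) (at t within {a..}))"
proof -
  have M0: "M \<ge> 0" using bnd[of a 0 0] by auto
  define u where "u n t = fst (picard G1 G2 a y1 y2 n t)" for n t
  define v where "v n t = snd (picard G1 G2 a y1 y2 n t)" for n t
  have u0: "u 0 t = y1" and v0: "v 0 t = y2" for t by (simp_all add: u_def v_def)
  have uS: "u (Suc n) t = y1 + integral {a..t} (\<lambda>s. G1 s (u n s) (v n s))"
   and vS: "v (Suc n) t = y2 + integral {a..t} (\<lambda>s. G2 s (u n s) (v n s))" for n t
    by (simp_all add: u_def v_def)
  have contn: "continuous_on {a..} (u n) \<and> continuous_on {a..} (v n)" for n
  proof (induction n)
    case 0 then show ?case by (simp add: u0 v0 continuous_on_const)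
  next
    case (Suc n)
    from cont[OF Suc[THEN conjunct1] Suc[THEN conjunct2]] show ?case
      unfolding uS vS by (auto intro!: continuous_on_add continuous_on_const int_cont_from)
  qed
  have contG: "continuous_on {a..} (\<lambda>s. G1 s (u n s) (v n s)) \<and> continuous_on {a..} (\<lambda>s. G2 s (u n s) (v n s))" for n
    using cont contn by blast
  have intG1: "(\<lambda>s. G1 s (u n s) (v n s)) integrable_on {a..t}" and intG2: "(\<lambda>s. G2 s (u n s) (v n s)) integrable_on {a..t}" for n t
    using contG[of n] by (auto intro!: integrable_continuous_real elim: continuous_on_subset)
  define c where "c n t = 2 * M * L ^ n * (t - a) ^ Suc n / fact (Suc n)" for n t
  have D: "\<bar>u (Suc n) t - u n t\<bar> + \<bar>v (Suc n) t - v n t\<bar> \<le> c n t" if "t \<ge> a" for n t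
    using that
  proof (induction n arbitrary: t)
    case 0
    have "continuous_on {a..t} (\<lambda>s. G1 s (u 0 s) (v 0 s))"
      using contG[of 0] by (auto elim: continuous_on_subset)
    then have c1: "\<bar>integral {a..t} (\<lambda>s. G1 s (u 0 s) (v 0 s))\<bar> \<le> M * (t - a)"
      using integral_bound[of a t "\<lambda>s. G1 s (u 0 s) (v 0 s)" M] 0 bnd by auto
    have "continuous_on {a..t} (\<lambda>s. G2 s (u 0 s) (v 0 s))"
      using contG[of 0] by (auto elim: continuous_on_subset)
    then have c2: "\<bar>integral {a..t} (\<lambda>s. G2 s (u 0 s) (v 0 s))\<bar> \<le> M * (t - a)"
      using integral_bound[of a t "\<lambda>s. G2 s (u 0 s) (v 0 s)" M] 0 bnd by auto
    show ?case using c1 c2 by (simp add: uS vS u0 v0 c_def)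
  next
    case (Suc n)
    define f1 where "f1 s = G1 s (u (Suc n) s) (v (Suc n) s) - G1 s (u n s) (v n s)" for s
    define f2 where "f2 s = G2 s (u (Suc n) s) (v (Suc n) s) - G2 s (u n s) (v n s)" for s
    have cf: "continuous_on {a..t} f1" "continuous_on {a..t} f2"
      unfolding f1_def f2_def using contG[of n] contG[of "Suc n"]
      by (auto intro!: continuous_on_diff elim: continuous_on_subset)
    have e1: "u (Suc (Suc n)) t - u (Suc n) t = integral {a..t} f1"
    proof -
      have "u (Suc (Suc n)) t - u (Suc n) t = integral {a..t} (\<lambda>s. G1 s (u (Suc n) s) (v (Suc n) s)) - integral {a..t} (\<lambda>s. G1 s (u n s) (v n s))"
        by (simp only: uS[of "Suc n" t] uS[of n t])
      also have "\<dots> = integral {a..t} f1" unfolding f1_def by (rule integral_diff[symmetric]) (rule intG1)+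
      finally show ?thesis .
    qed
    have e2: "v (Suc (Suc n)) t - v (Suc n) t = integral {a..t} f2"
    proof -
      have "v (Suc (Suc n)) t - v (Suc n) t = integral {a..t} (\<lambda>s. G2 s (u (Suc n) s) (v (Suc n) s)) - integral {a..t} (\<lambda>s. G2 s (u n s) (v n s))"
        by (simp only: vS[of "Suc n" t] vS[of n t])
      also have "\<dots> = integral {a..t} f2" unfolding f2_def by (rule integral_diff[symmetric]) (rule intG2)+
      finally show ?thesis .
    qed
    have "\<bar>integral {a..t} f1\<bar> \<le> integral {a..t} (\<lambda>s. \<bar>f1 s\<bar>)"
      using integral_norm_bound_integral[of f1 "{a..t}" "\<lambda>s. \<bar>f1 s\<bar>"] cf
      by (auto intro!: integrable_continuous_real continuous_on_rabs)
    moreover have "\<bar>integral {a..t} f2\<bar> \<le> integral {a..t} (\<lambda>s. \<bar>f2 s\<bar>)"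
      using integral_norm_bound_integral[of f2 "{a..t}" "\<lambda>s. \<bar>f2 s\<bar>"] cf
      by (auto intro!: integrable_continuous_real continuous_on_rabs)
    moreover have "integral {a..t} (\<lambda>s. \<bar>f1 s\<bar>) + integral {a..t} (\<lambda>s. \<bar>f2 s\<bar>) = integral {a..t} (\<lambda>s. \<bar>f1 s\<bar> + \<bar>f2 s\<bar>)"
      using cf by (intro integral_add[symmetric] integrable_continuous_real continuous_on_rabs)
    moreover have "integral {a..t} (\<lambda>s. \<bar>f1 s\<bar> + \<bar>f2 s\<bar>) \<le> integral {a..t} (\<lambda>s. (2 * M * L ^ Suc n / fact (Suc n)) * (s - a) ^ Suc n)"
    proof (rule integral_le)
      show "(\<lambda>s. \<bar>f1 s\<bar> + \<bar>f2 s\<bar>) integrable_on {a..t}" using cf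
        by (intro integrable_continuous_real continuous_on_add continuous_on_rabs)
      show "(\<lambda>s. (2 * M * L ^ Suc n / fact (Suc n)) * (s - a) ^ Suc n) integrable_on {a..t}"
        by (intro integrable_continuous_real continuous_intros)
      fix s assume s: "s \<in> {a..t}"
      have "\<bar>f1 s\<bar> + \<bar>f2 s\<bar> \<le> L * (\<bar>u (Suc n) s - u n s\<bar> + \<bar>v (Suc n) s - v n s\<bar>)"
        unfolding f1_def f2_def using lip s by auto
      also have "\<dots> \<le> L * c n s" using Suc.IH[of s] s L0 by (intro mult_left_mono) auto
      also have "\<dots> = (2 * M * L ^ Suc n / fact (Suc n)) * (s - a) ^ Suc n" by (simp add: c_def)
      finally show "\<bar>f1 s\<bar> + \<bar>f2 s\<bar> \<le> (2 * M * L ^ Suc n / fact (Suc n)) * (s - a) ^ Suc n" .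
    qed
    moreover have "integral {a..t} (\<lambda>s. (2 * M * L ^ Suc n / fact (Suc n)) * (s - a) ^ Suc n) = c (Suc n) t"
      using int_poly[OF Suc.prems, of "2 * M * L ^ Suc n / fact (Suc n)" "Suc n"]
      by (simp add: c_def fact_Suc field_simps del: of_nat_Suc)
    ultimately show ?case using e1 e2 by linarith
  qed
  have cmono: "c n s \<le> c n T" if "a \<le> s" "s \<le> T" for n s T
    unfolding c_def using that M0 L0
    by (intro divide_right_mono mult_left_mono power_mono) auto
  have c0: "c n T \<ge> 0" if "a \<le> T" for n T
    unfolding c_def using that M0 L0 by auto
  have summ: "summable (\<lambda>n. c n T)" if "a \<le> T" for T
  proof (rule summable_comparison_test)
    show "summable (\<lambda>n. (2 * M * (T - a)) * (inverse (fact n) * (L * (T - a)) ^ n))"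
      by (intro summable_mult summable_exp)
    show "\<exists>N. \<forall>n\<ge>N. norm (c n T) \<le> (2 * M * (T - a)) * (inverse (fact n) * (L * (T - a)) ^ n)"
    proof (intro exI allI impI)
      fix n :: nat
      have "norm (c n T) = c n T" using c0[OF that, of n] by simp
      also have "\<dots> = (2 * M * (T - a)) * ((L * (T - a)) ^ n / fact (Suc n))"
        unfolding c_def by (simp only: power_mult_distrib power_Suc) (simp add: mult_ac)
      also have "\<dots> \<le> (2 * M * (T - a)) * ((L * (T - a)) ^ n / fact n)"
        using M0 L0 that
        by (intro mult_left_mono divide_left_mono) (auto simp: fact_mono)
      finally show "norm (c n T) \<le> (2 * M * (T - a)) * (inverse (fact n) * (L * (T - a)) ^ n)"
        by (simp add: field_simps)
    qed
  qed
  define tl where "tl n T = suminf (\<lambda>k. c k T) - (\<Sum>k<n. c k T)" for n T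
  have tl_lim: "(\<lambda>n. tl n T) \<longlonglongrightarrow> 0" if "a \<le> T" for T
  proof -
    have "(\<lambda>n. suminf (\<lambda>k. c k T) - (\<Sum>k<n. c k T)) \<longlonglongrightarrow> suminf (\<lambda>k. c k T) - suminf (\<lambda>k. c k T)"
      by (intro tendsto_diff tendsto_const summable_LIMSEQ summ that)
    then show ?thesis by (simp add: tl_def)
  qed
  have cau: "\<bar>u m s - u n s\<bar> + \<bar>v m s - v n s\<bar> \<le> tl n T" if "a \<le> s" "s \<le> T" "n \<le> m" for n m s T
  proof -
    have "\<bar>u m s - u n s\<bar> + \<bar>v m s - v n s\<bar> \<le> (\<Sum>k\<in>{n..<m}. c k T)"
      using \<open>n \<le> m\<close>
    proof (induction m rule: dec_induct)
      case base then show ?case by simp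
    next
      case (step m)
      have "\<bar>u (Suc m) s - u n s\<bar> + \<bar>v (Suc m) s - v n s\<bar> \<le>
            (\<bar>u (Suc m) s - u m s\<bar> + \<bar>v (Suc m) s - v m s\<bar>) + (\<bar>u m s - u n s\<bar> + \<bar>v m s - v n s\<bar>)"
        by linarith
      also have "\<dots> \<le> c m T + (\<Sum>k\<in>{n..<m}. c k T)"
        using D[of s m] cmono[of s T m] step.IH that by linarith
      finally show ?case using step.hyps by simp
    qed
    also have "\<dots> \<le> tl n T"
    proof -
      have "(\<Sum>k<n. c k T) + (\<Sum>k\<in>{n..<m}. c k T) = (\<Sum>k<m. c k T)"
        using sum.atLeastLessThan_concat[of 0 n m "\<lambda>k. c k T"] \<open>n \<le> m\<close> by (simp add: atLeast0LessThan)
      moreover have "(\<Sum>k<m. c k T) \<le> suminf (\<lambda>k. c k T)"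
        using that c0 by (intro sum_le_suminf summ) auto
      ultimately show ?thesis unfolding tl_def by linarith
    qed
    finally show ?thesis .
  qed
  have conv: "convergent (\<lambda>n. u n s) \<and> convergent (\<lambda>n. v n s)" if "a \<le> s" for s
  proof -
    have "Cauchy (\<lambda>n. u n s) \<and> Cauchy (\<lambda>n. v n s)"
    proof (intro conjI metric_CauchyI)
      fix e :: real assume e: "0 < e"
      from tl_lim[OF that] e obtain N where N: "\<And>n. n \<ge> N \<Longrightarrow> \<bar>tl n s\<bar> < e/2"
        unfolding LIMSEQ_def dist_real_def by (metis half_gt_zero diff_zero)
      have "\<forall>m\<ge>N. \<forall>n\<ge>N. \<bar>u m s - u n s\<bar> < e \<and> \<bar>v m s - v n s\<bar> < e"
      proof (intro allI impI)
        fix m n assume "m \<ge> N" "n \<ge> N"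
        then show "\<bar>u m s - u n s\<bar> < e \<and> \<bar>v m s - v n s\<bar> < e"
          using cau[of s s N m] cau[of s s N n] N[of N] that by auto
      qed
      then show "\<exists>M. \<forall>m\<ge>M. \<forall>n\<ge>M. dist (u m s) (u n s) < e" 
        and "\<exists>M. \<forall>m\<ge>M. \<forall>n\<ge>M. dist (v m s) (v n s) < e"
        by (auto simp: dist_real_def)
    qed
    then show ?thesis by (simp add: Cauchy_convergent_iff)
  qed
  define \<phi> where "\<phi> s = lim (\<lambda>n. u n s)" for s
  define \<psi> where "\<psi> s = lim (\<lambda>n. v n s)" for s
  have lu: "(\<lambda>n. u n s) \<longlonglongrightarrow> \<phi> s" and lv: "(\<lambda>n. v n s) \<longlonglongrightarrow> \<psi> s" if "a \<le> s" for s
    using conv[OF that] by (simp_all add: \<phi>_def \<psi>_def convergent_LIMSEQ_iff)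
  have err: "\<bar>\<phi> s - u n s\<bar> + \<bar>\<psi> s - v n s\<bar> \<le> tl n T" if "a \<le> s" "s \<le> T" for n s T
  proof (rule tendsto_upperbound)
    show "((\<lambda>m. \<bar>u m s - u n s\<bar> + \<bar>v m s - v n s\<bar>) \<longlongrightarrow> \<bar>\<phi> s - u n s\<bar> + \<bar>\<psi> s - v n s\<bar>) sequentially"
      by (intro tendsto_intros lu lv that)
    show "\<forall>\<^sub>F m in sequentially. \<bar>u m s - u n s\<bar> + \<bar>v m s - v n s\<bar> \<le> tl n T"
      using eventually_ge_at_top[of n] by (rule eventually_mono) (rule cau[OF that])
  qed simp
  have ua: "u n a = y1 \<and> v n a = y2" for n by (cases n) (simp_all add: u0 v0 uS vS)
  have phia: "\<phi> a = y1" and psia: "\<psi> a = y2"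
    using lu[of a] lv[of a] ua by (simp_all add: LIMSEQ_const_iff)
  have lipn: "\<bar>u n t - u n s\<bar> \<le> M * (t - s) \<and> \<bar>v n t - v n s\<bar> \<le> M * (t - s)" if "a \<le> s" "s \<le> t" for n s t
  proof (cases n)
    case 0 then show ?thesis using that M0 by (simp add: u0 v0)
  next
    case (Suc k)
    have cs: "continuous_on {s..t} (\<lambda>x. G1 x (u k x) (v k x)) \<and> continuous_on {s..t} (\<lambda>x. G2 x (u k x) (v k x))"
      using contG[of k] that by (auto elim: continuous_on_subset)
    have "u n t - u n s = integral {s..t} (\<lambda>x. G1 x (u k x) (v k x))"
      using integral_combine[of a s t "\<lambda>x. G1 x (u k x) (v k x)", OF that intG1] by (simp add: Suc uS)
    moreover have "v n t - v n s = integral {s..t} (\<lambda>x. G2 x (u k x) (v k x))"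
      using integral_combine[of a s t "\<lambda>x. G2 x (u k x) (v k x)", OF that intG2] by (simp add: Suc vS)
    moreover have "\<bar>integral {s..t} (\<lambda>x. G1 x (u k x) (v k x))\<bar> \<le> M * (t - s)"
      using integral_bound[of s t "\<lambda>x. G1 x (u k x) (v k x)" M] cs bnd that by auto
    moreover have "\<bar>integral {s..t} (\<lambda>x. G2 x (u k x) (v k x))\<bar> \<le> M * (t - s)"
      using integral_bound[of s t "\<lambda>x. G2 x (u k x) (v k x)" M] cs bnd that by auto
    ultimately show ?thesis by simp
  qed
  have lipphi: "\<bar>\<phi> t - \<phi> s\<bar> \<le> M * (t - s) \<and> \<bar>\<psi> t - \<psi> s\<bar> \<le> M * (t - s)" if "a \<le> s" "s \<le> t" for s t
  proof
    show "\<bar>\<phi> t - \<phi> s\<bar> \<le> M * (t - s)"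
    proof (rule tendsto_upperbound)
      show "((\<lambda>n. \<bar>u n t - u n s\<bar>) \<longlongrightarrow> \<bar>\<phi> t - \<phi> s\<bar>) sequentially"
        by (intro tendsto_intros lu) (use that in auto)
      show "\<forall>\<^sub>F n in sequentially. \<bar>u n t - u n s\<bar> \<le> M * (t - s)"
        by (intro always_eventually allI) (use lipn[OF that] in auto)
    qed simp
    show "\<bar>\<psi> t - \<psi> s\<bar> \<le> M * (t - s)"
    proof (rule tendsto_upperbound)
      show "((\<lambda>n. \<bar>v n t - v n s\<bar>) \<longlongrightarrow> \<bar>\<psi> t - \<psi> s\<bar>) sequentially"
        by (intro tendsto_intros lv) (use that in auto)
      show "\<forall>\<^sub>F n in sequentially. \<bar>v n t - v n s\<bar> \<le> M * (t - s)"
        by (intro always_eventually allI) (use lipn[OF that] in auto)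
    qed simp
  qed
  have lip2: "\<bar>\<phi> t - \<phi> s\<bar> \<le> M * \<bar>t - s\<bar> \<and> \<bar>\<psi> t - \<psi> s\<bar> \<le> M * \<bar>t - s\<bar>" if "s \<in> {a..}" "t \<in> {a..}" for s t
  proof (cases "s \<le> t")
    case True then show ?thesis using lipphi[of s t] that by auto
  next
    case False then show ?thesis using lipphi[of t s] that by (auto simp: abs_minus_commute)
  qed
  have cphi: "continuous_on {a..} \<phi>" and cpsi: "continuous_on {a..} \<psi>"
    using lip2 M0 by (auto intro!: lip_cont[where K=M])
  define g1 where "g1 s = G1 s (\<phi> s) (\<psi> s)" for s
  define g2 where "g2 s = G2 s (\<phi> s) (\<psi> s)" for s
  have cg: "continuous_on {a..} g1" "continuous_on {a..} g2"
    using cont[OF cphi cpsi] by (simp_all add: g1_def g2_def)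
  have inteq: "\<phi> t = y1 + integral {a..t} g1 \<and> \<psi> t = y2 + integral {a..t} g2" if "a \<le> t" for t
  proof -
    have bound_n: "\<bar>\<phi> t - y1 - integral {a..t} g1\<bar> + \<bar>\<psi> t - y2 - integral {a..t} g2\<bar> \<le> tl (Suc n) t + 2 * (L * tl n t) * (t - a)" for n
    proof -
      have cd: "continuous_on {a..t} (\<lambda>s. G1 s (u n s) (v n s) - g1 s)" "continuous_on {a..t} (\<lambda>s. G2 s (u n s) (v n s) - g2 s)"
        using contG[of n] cg by (auto intro!: continuous_on_diff elim: continuous_on_subset)
      have pb: "\<bar>G1 s (u n s) (v n s) - g1 s\<bar> \<le> L * tl n t \<and> \<bar>G2 s (u n s) (v n s) - g2 s\<bar> \<le> L * tl n t" if "s \<in> {a..t}" for s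
      proof -
        have "\<bar>G1 s (u n s) (v n s) - g1 s\<bar> + \<bar>G2 s (u n s) (v n s) - g2 s\<bar> \<le> L * (\<bar>u n s - \<phi> s\<bar> + \<bar>v n s - \<psi> s\<bar>)"
          unfolding g1_def g2_def using lip that by auto
        also have "\<dots> \<le> L * tl n t"
          using err[of s t n] that L0 by (intro mult_left_mono) (auto simp: abs_minus_commute)
        finally show ?thesis by linarith
      qed
      have i1: "\<bar>integral {a..t} (\<lambda>s. G1 s (u n s) (v n s) - g1 s)\<bar> \<le> L * tl n t * (t - a)"
        using integral_bound[OF that cd(1)] pb by auto
      have i2: "\<bar>integral {a..t} (\<lambda>s. G2 s (u n s) (v n s) - g2 s)\<bar> \<le> L * tl n t * (t - a)"
        using integral_bound[OF that cd(2)] pb by auto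
      have ig: "g1 integrable_on {a..t}" "g2 integrable_on {a..t}"
        using cg by (auto intro!: integrable_continuous_real elim: continuous_on_subset)
      have "\<phi> t - y1 - integral {a..t} g1 = (\<phi> t - u (Suc n) t) + integral {a..t} (\<lambda>s. G1 s (u n s) (v n s) - g1 s)"
        by (simp add: uS integral_diff intG1 ig)
      moreover have "\<psi> t - y2 - integral {a..t} g2 = (\<psi> t - v (Suc n) t) + integral {a..t} (\<lambda>s. G2 s (u n s) (v n s) - g2 s)"
        by (simp add: vS integral_diff intG2 ig)
      moreover have "\<bar>\<phi> t - u (Suc n) t\<bar> + \<bar>\<psi> t - v (Suc n) t\<bar> \<le> tl (Suc n) t" using err[of t t "Suc n"] that by simp
      ultimately show ?thesis using i1 i2 by linarith
    qed
    have "(\<lambda>n. tl (Suc n) t + 2 * (L * tl n t) * (t - a)) \<longlonglongrightarrow> 0 + 2 * (L * 0) * (t - a)"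
      by (intro tendsto_intros tl_lim[OF that] LIMSEQ_Suc)
    then have "\<bar>\<phi> t - y1 - integral {a..t} g1\<bar> + \<bar>\<psi> t - y2 - integral {a..t} g2\<bar> \<le> 0"
      by (intro tendsto_lowerbound[of "\<lambda>n. tl (Suc n) t + 2 * (L * tl n t) * (t - a)"]) (use bound_n in auto)
    then show ?thesis by linarith
  qed
  show ?thesis
  proof (intro exI conjI allI impI)
    show "\<phi> a = y1" by (fact phia)
    show "\<psi> a = y2" by (fact psia)
    fix t assume t: "a \<le> t"
    have "((\<lambda>x. y1 + integral {a..x} g1) has_real_derivative g1 t) (at t within {a..})"
      using DERIV_add[OF DERIV_const[of y1] int_deriv_from[OF cg(1) t]] by simp
    then show "(\<phi> has_real_derivative G1 t (\<phi> t) (\<psi> t)) (at t within {a..})"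
      unfolding g1_def[symmetric]
      by (rule has_field_derivative_transform_within[where d=1]) (use t inteq in auto)
    have "((\<lambda>x. y2 + integral {a..x} g2) has_real_derivative g2 t) (at t within {a..})"
      using DERIV_add[OF DERIV_const[of y2] int_deriv_from[OF cg(2) t]] by simp
    then show "(\<psi> has_real_derivative G2 t (\<phi> t) (\<psi> t)) (at t within {a..})"
      unfolding g2_def[symmetric]
      by (rule has_field_derivative_transform_within[where d=1]) (use t inteq in auto)
  qed
qed



lemma setup_facts:
  fixes r A B :: "real \<Rightarrow> real"
  assumes r_gt1: "\<forall>t>0. r t > 1"
    and A_def: "\<forall>t>0. A t = r t / 3 * sqrt (1 - r t powr (-3))"
    and B_def: "\<forall>t>0. B t = r t / sqrt 3"
    and A_ode: "\<forall>t>0. (A has_real_derivative (1/2) * (1 - (A t)\<^sup>2 / (B t)\<^sup>2)) (at t)"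
    and B_ode: "\<forall>t>0. (B has_real_derivative A t / B t) (at t)"
  shows "\<forall>t>0. A t > 0 \<and> B t > 0 \<and> 0 < 1/3 - (A t)\<^sup>2/(B t)\<^sup>2 \<and> 1/3 - (A t)\<^sup>2/(B t)\<^sup>2 < 1/3
             \<and> 1/3 - (A t)\<^sup>2/(B t)\<^sup>2 \<le> 1 / (81 * A t ^ 3)"
    and "\<forall>s t. 0 < s \<longrightarrow> s \<le> t \<longrightarrow> 1/3 - (A t)\<^sup>2/(B t)\<^sup>2 \<le> 1/3 - (A s)\<^sup>2/(B s)\<^sup>2"
proof -
  have key: "A t > 0 \<and> B t > 0 \<and> 1/3 - (A t)\<^sup>2/(B t)\<^sup>2 = 1 / (3 * r t ^ 3) \<and> A t \<le> r t / 3" if t: "t > 0" for t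
  proof -
    define \<rho> where "\<rho> = r t"
    have \<rho>1: "\<rho> > 1" using r_gt1 t by (simp add: \<rho>_def)
    have pw: "\<rho> powr (-3) = 1 / \<rho> ^ 3" using \<rho>1 by (simp add: powr_minus powr_realpow divide_inverse)
    have e1: "1 / \<rho> ^ 3 < 1" using \<rho>1 by (simp add: one_less_power)
    have e0: "1 / \<rho> ^ 3 > 0" using \<rho>1 by simp
    have sq: "sqrt (1 - 1/\<rho>^3) ^ 2 = 1 - 1/\<rho>^3" using e1 by simp
    have sqpos: "sqrt (1 - 1/\<rho>^3) > 0" using e1 by simp
    have sqle: "sqrt (1 - 1/\<rho>^3) \<le> 1" using e0 by simp
    have A: "A t = \<rho> / 3 * sqrt (1 - 1/\<rho>^3)" using A_def t pw by (simp add: \<rho>_def)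
    have B: "B t = \<rho> / sqrt 3" using B_def t by (simp add: \<rho>_def)
    have Apos: "A t > 0" unfolding A using \<rho>1 sqpos by (intro mult_pos_pos) auto
    have Bpos: "B t > 0" using B \<rho>1 by simp
    have "(A t)\<^sup>2/(B t)\<^sup>2 = (\<rho>^2 / 9 * (1 - 1/\<rho>^3)) / (\<rho>^2 / 3)"
      unfolding A B by (simp add: power_mult_distrib power_divide sq)
    also have "\<dots> = (1 - 1/\<rho>^3) / 3" using \<rho>1 by (simp add: field_simps)
    finally have "1/3 - (A t)\<^sup>2/(B t)\<^sup>2 = 1 / (3 * \<rho> ^ 3)" by simp
    moreover have "A t \<le> \<rho> / 3" unfolding A using \<rho>1 sqle by (simp add: mult_left_le)
    ultimately show ?thesis using Apos Bpos by (simp add: \<rho>_def)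
  qed
  have Bmono: "B s \<le> B t" if "0 < s" "s \<le> t" for s t
  proof (rule DERIV_nonneg_imp_nondecreasing[OF that(2)])
    fix x assume "s \<le> x" "x \<le> t"
    then have x: "x > 0" using that by simp
    show "\<exists>y. (B has_real_derivative y) (at x) \<and> 0 \<le> y"
      using B_ode x key[OF x] by (intro exI[of _ "A x / B x"]) auto
  qed
  have rmono: "r s \<le> r t" if "0 < s" "s \<le> t" for s t
  proof -
    have "r s / sqrt 3 \<le> r t / sqrt 3" using Bmono[OF that] B_def that by auto
    then show ?thesis by (simp add: divide_le_cancel)
  qed
  show "\<forall>t>0. A t > 0 \<and> B t > 0 \<and> 0 < 1/3 - (A t)\<^sup>2/(B t)\<^sup>2 \<and> 1/3 - (A t)\<^sup>2/(B t)\<^sup>2 < 1/3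
             \<and> 1/3 - (A t)\<^sup>2/(B t)\<^sup>2 \<le> 1 / (81 * A t ^ 3)"
  proof (intro allI impI)
    fix t :: real assume t: "t > 0"
    have r1: "r t > 1" using r_gt1 t by simp
    have A3: "A t ^ 3 \<le> (r t / 3) ^ 3" using key[OF t] by (intro power_mono) auto
    have "1 / (3 * r t ^ 3) \<le> 1 / (81 * A t ^ 3)"
      using key[OF t] A3 r1 by (simp add: field_simps power_divide)
    moreover have "1 / (3 * r t ^ 3) < 1/3" using r1 by (simp add: field_simps one_less_power)
    ultimately show "A t > 0 \<and> B t > 0 \<and> 0 < 1/3 - (A t)\<^sup>2/(B t)\<^sup>2 \<and> 1/3 - (A t)\<^sup>2/(B t)\<^sup>2 < 1/3
             \<and> 1/3 - (A t)\<^sup>2/(B t)\<^sup>2 \<le> 1 / (81 * A t ^ 3)"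
      using key[OF t] r1 by auto
  qed
  show "\<forall>s t. 0 < s \<longrightarrow> s \<le> t \<longrightarrow> 1/3 - (A t)\<^sup>2/(B t)\<^sup>2 \<le> 1/3 - (A s)\<^sup>2/(B s)\<^sup>2"
  proof (intro allI impI)
    fix s t :: real assume st: "0 < s" "s \<le> t"
    have "r s ^ 3 \<le> r t ^ 3" using rmono[OF st] r_gt1 st by (intro power_mono) auto
    moreover have "r s > 1" "r t > 1" using r_gt1 st by auto
    ultimately have "1 / (3 * r t ^ 3) \<le> 1 / (3 * r s ^ 3)"
      by (intro divide_left_mono mult_left_mono mult_pos_pos) auto
    then show "1/3 - (A t)\<^sup>2/(B t)\<^sup>2 \<le> 1/3 - (A s)\<^sup>2/(B s)\<^sup>2"
      using key[of s] key[of t] st by simp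
  qed
qed

definition epf :: "(real \<Rightarrow> real) \<Rightarrow> (real \<Rightarrow> real) \<Rightarrow> real \<Rightarrow> real" where
  "epf A B t = 1/3 - (A t)\<^sup>2/(B t)\<^sup>2"

definition clampI :: "real \<Rightarrow> real" where "clampI z = max 0 (min 1 z)"

lemma clampI_bounds: "0 \<le> clampI z" "clampI z \<le> 1" by (auto simp: clampI_def)
lemma clampI_id: "0 \<le> z \<Longrightarrow> z \<le> 1 \<Longrightarrow> clampI z = z" by (auto simp: clampI_def)
lemma clampI_lip: "\<bar>clampI z - clampI w\<bar> \<le> \<bar>z - w\<bar>" by (auto simp: clampI_def)
lemma continuous_on_clampI [continuous_intros]: "continuous_on S f \<Longrightarrow> continuous_on S (\<lambda>x. clampI (f x))"
  unfolding clampI_def by (intro continuous_intros)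

lemma tri2: "\<bar>x\<bar> \<le> a * 2 \<Longrightarrow> \<bar>y\<bar> \<le> b * 2 * (1/3) \<Longrightarrow> \<bar>x + y\<bar> \<le> 2 * a + (b::real)"
  using abs_triangle_ineq[of x y] by linarith

lemma prod_lip:
  fixes x y x' y' :: real
  assumes "\<bar>x\<bar> \<le> R" "\<bar>y'\<bar> \<le> R"
  shows "\<bar>x * y - x' * y'\<bar> \<le> R * \<bar>y - y'\<bar> + R * \<bar>x - x'\<bar>"
proof -
  have "x * y - x' * y' = x * (y - y') + (x - x') * y'" by (simp add: algebra_simps)
  then have "\<bar>x * y - x' * y'\<bar> \<le> \<bar>x\<bar> * \<bar>y - y'\<bar> + \<bar>x - x'\<bar> * \<bar>y'\<bar>" by (simp add: abs_mult[symmetric] abs_triangle_ineq)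
  also have "\<dots> \<le> R * \<bar>y - y'\<bar> + R * \<bar>x - x'\<bar>"
  proof (rule add_mono)
    show "\<bar>x\<bar> * \<bar>y - y'\<bar> \<le> R * \<bar>y - y'\<bar>" using assms(1) by (rule mult_right_mono) simp
    show "\<bar>x - x'\<bar> * \<bar>y'\<bar> \<le> R * \<bar>x - x'\<bar>" using mult_left_mono[OF assms(2), of "\<bar>x - x'\<bar>"] by (simp add: mult.commute)
  qed
  finally show ?thesis .
qed

lemma barrier:
  fixes g :: "real \<Rightarrow> real"
  assumes cg: "continuous_on {a..} g" and ga: "g a > 0"
    and step: "\<And>b. a < b \<Longrightarrow> (\<forall>s\<in>{a..<b}. g s > 0) \<Longrightarrow> g b > 0"
    and t: "t \<ge> a"
  shows "g t > 0"
proof (rule ccontr)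
  assume neg: "\<not> g t > 0"
  define S where "S = {a..t} \<inter> g -` {..0}"
  have cl: "closed S" unfolding S_def
    by (rule continuous_closed_preimage) (use cg in \<open>auto elim: continuous_on_subset\<close>)
  have tS: "t \<in> S" using neg t by (auto simp: S_def)
  have bdd: "bdd_below S" by (auto simp: S_def bdd_below_def)
  define b where "b = Inf S"
  have bS: "b \<in> S" unfolding b_def using closed_contains_Inf[OF _ bdd cl] tS by auto
  then have ab: "a \<le> b" "b \<le> t" "g b \<le> 0" by (auto simp: S_def)
  have "b \<noteq> a" using ab ga by auto
  then have ab': "a < b" using ab by simp
  have "\<forall>s\<in>{a..<b}. g s > 0"
  proof
    fix s assume s: "s \<in> {a..<b}"
    show "g s > 0"
    proof (rule ccontr)
      assume "\<not> g s > 0"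
      then have "s \<in> S" using s ab by (auto simp: S_def)
      then have "b \<le> s" unfolding b_def using bdd by (rule cInf_lower)
      then show False using s by simp
    qed
  qed
  from step[OF ab' this] ab show False by simp
qed

lemma grow_pos:
  fixes f f' :: "real \<Rightarrow> real"
  assumes ab: "a \<le> b" and cf: "continuous_on {a..b} f"
    and d: "\<And>x. a < x \<Longrightarrow> x < b \<Longrightarrow> (f has_real_derivative f' x) (at x) \<and> f' x \<ge> - K * f x"
    and fa: "f a > 0"
  shows "f b > 0"
proof -
  have "(\<lambda>x. f x * exp (K * x)) a \<le> (\<lambda>x. f x * exp (K * x)) b"
  proof (rule DERIV_nonneg_imp_increasing_open[OF ab])
    fix x assume x: "a < x" "x < b"
    have de: "((\<lambda>x. exp (K * x)) has_real_derivative exp (K * x) * K) (at x)"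
      by (auto intro!: derivative_eq_intros)
    have "((\<lambda>x. f x * exp (K * x)) has_real_derivative f' x * exp (K * x) + exp (K * x) * K * f x) (at x)"
      using DERIV_mult[OF conjunct1[OF d[OF x]] de] .
    moreover have "f' x * exp (K * x) + exp (K * x) * K * f x = exp (K * x) * (f' x + K * f x)"
      by (simp add: algebra_simps)
    moreover have "exp (K * x) * (f' x + K * f x) \<ge> 0" using d[OF x] by simp
    ultimately show "\<exists>y. ((\<lambda>x. f x * exp (K * x)) has_real_derivative y) (at x) \<and> 0 \<le> y" by auto
  next
    show "continuous_on {a..b} (\<lambda>x. f x * exp (K * x))" by (intro continuous_intros cf)
  qed
  then have "f b * exp (K * b) > 0" using fa by (smt (verit) exp_gt_zero mult_pos_pos)
  then show ?thesis by (simp add: zero_less_mult_iff)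
qed

lemma decay_zero:
  fixes d d' :: "real \<Rightarrow> real"
  assumes ab: "a \<le> b" and cd: "continuous_on {a..b} d"
    and dd: "\<And>x. a < x \<Longrightarrow> x < b \<Longrightarrow> (d has_real_derivative d' x) (at x) \<and> d' x \<le> K * d x"
    and da: "d a = 0"
  shows "d b \<le> 0"
proof -
  have "(\<lambda>x. d x * exp (- K * x)) b \<le> (\<lambda>x. d x * exp (- K * x)) a"
  proof (rule DERIV_nonpos_imp_decreasing_open[OF ab])
    fix x assume x: "a < x" "x < b"
    have de: "((\<lambda>x. exp (- K * x)) has_real_derivative exp (- K * x) * (- K)) (at x)"
      by (auto intro!: derivative_eq_intros)
    have "((\<lambda>x. d x * exp (- K * x)) has_real_derivative d' x * exp (- K * x) + exp (- K * x) * (- K) * d x) (at x)"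
      using DERIV_mult[OF conjunct1[OF dd[OF x]] de] .
    moreover have "d' x * exp (- K * x) + exp (- K * x) * (- K) * d x = exp (- K * x) * (d' x - K * d x)"
      by (simp add: algebra_simps)
    moreover have "exp (- K * x) * (d' x - K * d x) \<le> 0" using dd[OF x] by (simp add: mult_nonneg_nonpos)
    ultimately show "\<exists>y. ((\<lambda>x. d x * exp (- K * x)) has_real_derivative y) (at x) \<and> y \<le> 0" by auto
  next
    show "continuous_on {a..b} (\<lambda>x. d x * exp (- K * x))" by (intro continuous_intros cd)
  qed
  then have "d b * exp (- K * b) \<le> 0" using da by simp
  then show ?thesis by (simp add: mult_le_0_iff)
qed

lemma sq_bound:
  fixes x y f1 f2 K :: real
  assumes "\<bar>f1\<bar> \<le> K * (\<bar>x\<bar> + \<bar>y\<bar>)" "\<bar>f2\<bar> \<le> K * (\<bar>x\<bar> + \<bar>y\<bar>)" "K \<ge> 0"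
  shows "2 * x * f1 + 2 * y * f2 \<le> 4 * K * (x\<^sup>2 + y\<^sup>2)"
proof -
  have "x * f1 \<le> \<bar>x\<bar> * (K * (\<bar>x\<bar> + \<bar>y\<bar>))"
  proof -
    have "x * f1 \<le> \<bar>x\<bar> * \<bar>f1\<bar>" by (metis abs_ge_self abs_mult)
    also have "\<dots> \<le> \<bar>x\<bar> * (K * (\<bar>x\<bar> + \<bar>y\<bar>))" using assms(1) by (intro mult_left_mono) auto
    finally show ?thesis .
  qed
  moreover have "y * f2 \<le> \<bar>y\<bar> * (K * (\<bar>x\<bar> + \<bar>y\<bar>))"
  proof -
    have "y * f2 \<le> \<bar>y\<bar> * \<bar>f2\<bar>" by (metis abs_ge_self abs_mult)
    also have "\<dots> \<le> \<bar>y\<bar> * (K * (\<bar>x\<bar> + \<bar>y\<bar>))" using assms(2) by (intro mult_left_mono) auto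
    finally show ?thesis .
  qed
  ultimately have "2 * x * f1 + 2 * y * f2 \<le> 2 * K * (\<bar>x\<bar> + \<bar>y\<bar>)\<^sup>2"
    by (simp add: power2_eq_square algebra_simps)
  also have "\<dots> \<le> 2 * K * (2 * (x\<^sup>2 + y\<^sup>2))"
  proof -
    have "0 \<le> (\<bar>x\<bar> - \<bar>y\<bar>)\<^sup>2" by simp
    then have "(\<bar>x\<bar> + \<bar>y\<bar>)\<^sup>2 \<le> 2 * (x\<^sup>2 + y\<^sup>2)" by (simp add: power2_eq_square algebra_simps)
    then show ?thesis using assms(3) by (intro mult_left_mono) auto
  qed
  finally show ?thesis by (simp add: algebra_simps)
qed

lemma bounded_on_Icc:
  fixes f :: "real \<Rightarrow> real"
  assumes "continuous_on {a..b} f"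
  shows "\<exists>R. \<forall>s\<in>{a..b}. \<bar>f s\<bar> \<le> R"
proof -
  have "bounded (f ` {a..b})" by (rule compact_imp_bounded[OF compact_continuous_image[OF assms compact_Icc]])
  then obtain R where "\<forall>x\<in>f ` {a..b}. norm x \<le> R" by (auto simp: bounded_iff)
  then show ?thesis by auto
qed

locale sysl =
  fixes A B :: "real \<Rightarrow> real" and t0 :: real
  assumes t0: "t0 > 0"
    and basic: "\<And>t. t > 0 \<Longrightarrow> A t > 0 \<and> B t > 0 \<and> 0 < epf A B t \<and> epf A B t < 1/3 \<and> epf A B t \<le> 1/(81 * A t ^ 3)"
    and emono: "\<And>s t. 0 < s \<Longrightarrow> s \<le> t \<Longrightarrow> epf A B t \<le> epf A B s"
    and Ader: "\<And>t. t > 0 \<Longrightarrow> (A has_real_derivative 1/3 + epf A B t / 2) (at t)"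
    and Bder: "\<And>t. t > 0 \<Longrightarrow> (B has_real_derivative A t / B t) (at t)"
begin

abbreviation "ep \<equiv> epf A B"



lemma Apos: "t > 0 \<Longrightarrow> A t > 0" using basic by blast
lemma Bpos: "t > 0 \<Longrightarrow> B t > 0" using basic by blast
lemma ep_pos: "t > 0 \<Longrightarrow> ep t > 0" using basic by blast
lemma ep_lt: "t > 0 \<Longrightarrow> ep t < 1/3" using basic by blast
lemma ep_le: "t > 0 \<Longrightarrow> ep t \<le> 1/(81 * A t ^ 3)" using basic by blast

lemma Acont: "continuous_on {0<..} A"
  by (rule continuous_at_imp_continuous_on) (auto intro: DERIV_isCont Ader)
lemma Bcont: "continuous_on {0<..} B"
  by (rule continuous_at_imp_continuous_on) (auto intro: DERIV_isCont Bder)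
lemma epcont: "continuous_on {0<..} ep"
  unfolding epf_def by (intro continuous_intros Acont Bcont) (auto dest: Bpos)

lemma Agrow: "0 < s \<Longrightarrow> s \<le> t \<Longrightarrow> A s + (t - s) / 3 \<le> A t"
proof -
  assume st: "0 < s" "s \<le> t"
  have "(\<lambda>x. A x - x / 3) s \<le> (\<lambda>x. A x - x / 3) t"
  proof (rule DERIV_nonneg_imp_nondecreasing[OF st(2)])
    fix x assume "s \<le> x" "x \<le> t"
    then have x: "x > 0" using st by simp
    show "\<exists>y. ((\<lambda>x. A x - x / 3) has_real_derivative y) (at x) \<and> 0 \<le> y"
    proof (intro exI conjI)
      show "((\<lambda>x. A x - x / 3) has_real_derivative (1/3 + ep x / 2) - 1 / 3) (at x)"
        by (rule DERIV_diff[OF Ader[OF x]]) (rule DERIV_cdivide[OF DERIV_ident, of 3, simplified])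
      show "0 \<le> 1/3 + ep x / 2 - 1 / 3" using ep_pos[OF x] by simp
    qed
  qed
  then show ?thesis by (simp add: field_simps)
qed

lemma Amono: "0 < s \<Longrightarrow> s \<le> t \<Longrightarrow> A s \<le> A t"
proof -
  assume "0 < s" "s \<le> t"
  from Agrow[OF this] this(2) show ?thesis by (simp add: field_simps)
qed

lemma fplus_eq: "t > 0 \<Longrightarrow> fplus_rhs (A t) (B t) u v = (1 / A t) * (u * (2/3 + ep t - u) + v\<^sup>2 * (1/3 - ep t))"
  using Apos[of t] Bpos[of t] unfolding fplus_rhs_def epf_def by (simp add: field_simps power2_eq_square)

lemma fminus_eq: "t > 0 \<Longrightarrow> fminus_rhs (A t) (B t) u v = (2 / A t) * v * (u - 1)"
  unfolding fminus_rhs_def by simp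

definition G1 where "G1 s u v = (1 / A s) * (clampI u * (2/3 + ep s - clampI u) + (clampI v)\<^sup>2 * (1/3 - ep s))"
definition G2 where "G2 s u v = (2 / A s) * clampI v * (clampI u - 1)"

lemma clamped_exists:
  "\<exists>\<phi> \<psi>. \<phi> t0 = y1 \<and> \<psi> t0 = y2 \<and> (\<forall>t\<ge>t0. (\<phi> has_real_derivative G1 t (\<phi> t) (\<psi> t)) (at t within {t0..}) \<and>
                 (\<psi> has_real_derivative G2 t (\<phi> t) (\<psi> t)) (at t within {t0..}))"
proof (rule picard_exists[where M="2 / A t0" and L="4 / A t0"])
  have A0: "A t0 > 0" using Apos t0 by simp
  have sub: "{t0..} \<subseteq> {0<..}" using t0 by auto
  have cA: "continuous_on {t0..} A" and ce: "continuous_on {t0..} ep"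
    using Acont epcont sub by (auto elim: continuous_on_subset)
  fix \<phi> \<psi> :: "real \<Rightarrow> real"
  assume c: "continuous_on {t0..} \<phi>" "continuous_on {t0..} \<psi>"
  show "continuous_on {t0..} (\<lambda>s. G1 s (\<phi> s) (\<psi> s)) \<and> continuous_on {t0..} (\<lambda>s. G2 s (\<phi> s) (\<psi> s))"
  proof -
    have Ane: "\<forall>x\<in>{t0..}. A x \<noteq> 0"
    proof
      fix x assume "x \<in> {t0..}" then have "x > 0" using t0 by auto
      then show "A x \<noteq> 0" using Apos[of x] by simp
    qed
    show ?thesis unfolding G1_def G2_def using Ane
      by (auto intro!: continuous_intros c cA ce)
  qed
next
  have A0: "A t0 > 0" using Apos t0 by simp
  fix s u v :: real assume s: "t0 \<le> s"
  have As: "A s \<ge> A t0" using Amono[OF t0 s] .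
  have As0: "A s > 0" using A0 As by simp
  have es: "0 < ep s" "ep s < 1/3" using ep_pos ep_lt s t0 by auto
  have inv: "1 / A s \<le> 1 / A t0" using As A0 by (simp add: frac_le)
  have X: "\<bar>clampI u * (2/3 + ep s - clampI u) + (clampI v)\<^sup>2 * (1/3 - ep s)\<bar> \<le> 2"
  proof -
    have "\<bar>clampI u * (2/3 + ep s - clampI u)\<bar> \<le> 1 * 1"
      unfolding abs_mult using clampI_bounds[of u] es by (intro mult_mono) auto
    moreover have "\<bar>(clampI v)\<^sup>2 * (1/3 - ep s)\<bar> \<le> 1 * 1"
      unfolding abs_mult using clampI_bounds[of v] es by (intro mult_mono) (auto simp: power_le_one abs_le_iff)
    ultimately show ?thesis by linarith
  qed
  have g1: "\<bar>G1 s u v\<bar> \<le> 2 / A t0"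
  proof -
    have "\<bar>G1 s u v\<bar> = (1 / A s) * \<bar>clampI u * (2/3 + ep s - clampI u) + (clampI v)\<^sup>2 * (1/3 - ep s)\<bar>"
      unfolding G1_def abs_mult using As0 by simp
    also have "\<dots> \<le> (1 / A t0) * 2" using inv X As0 A0 by (intro mult_mono) auto
    finally show ?thesis by simp
  qed
  have Y: "\<bar>clampI v * (clampI u - 1)\<bar> \<le> 1 * 1"
    unfolding abs_mult using clampI_bounds[of v] clampI_bounds[of u] by (intro mult_mono) auto
  have g2: "\<bar>G2 s u v\<bar> \<le> 2 / A t0"
  proof -
    have "\<bar>G2 s u v\<bar> = (2 / A s) * \<bar>clampI v * (clampI u - 1)\<bar>"
      unfolding G2_def abs_mult using As0 by (simp add: mult.assoc)
    also have "\<dots> \<le> (2 / A t0) * 1" using inv Y As0 A0 by (intro mult_mono) auto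
    finally show ?thesis by simp
  qed
  show "\<bar>G1 s u v\<bar> \<le> 2 / A t0 \<and> \<bar>G2 s u v\<bar> \<le> 2 / A t0" using g1 g2 by simp
next
  have A0: "A t0 > 0" using Apos t0 by simp
  fix s u v u' v' :: real assume s: "t0 \<le> s"
  have As: "A s \<ge> A t0" using Amono[OF t0 s] .
  have As0: "A s > 0" using A0 As by simp
  have es: "0 < ep s" "ep s < 1/3" using ep_pos ep_lt s t0 by auto
  have inv: "1 / A s \<le> 1 / A t0" using As A0 by (simp add: frac_le)
  define a b a' b' where "a = clampI u" "b = clampI v" "a' = clampI u'" "b' = clampI v'"
  have ab: "0 \<le> a" "a \<le> 1" "0 \<le> b" "b \<le> 1" "0 \<le> a'" "a' \<le> 1" "0 \<le> b'" "b' \<le> 1"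
    unfolding a_b_a'_b'_def by (simp_all add: clampI_bounds)
  have da: "\<bar>a - a'\<bar> \<le> \<bar>u - u'\<bar>" and db: "\<bar>b - b'\<bar> \<le> \<bar>v - v'\<bar>"
    unfolding a_b_a'_b'_def by (simp_all add: clampI_lip)
  have X: "\<bar>(a * (2/3 + ep s - a) + b\<^sup>2 * (1/3 - ep s)) - (a' * (2/3 + ep s - a') + b'\<^sup>2 * (1/3 - ep s))\<bar> \<le> 2 * \<bar>a - a'\<bar> + \<bar>b - b'\<bar>"
  proof -
    have e: "(a * (2/3 + ep s - a) + b\<^sup>2 * (1/3 - ep s)) - (a' * (2/3 + ep s - a') + b'\<^sup>2 * (1/3 - ep s))
          = (a - a') * (2/3 + ep s - a - a') + ((b - b') * (b + b')) * (1/3 - ep s)"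
      by (simp add: algebra_simps power2_eq_square) (simp add: field_simps)
    have "\<bar>(a - a') * (2/3 + ep s - a - a')\<bar> \<le> \<bar>a - a'\<bar> * 2"
      unfolding abs_mult using ab es by (intro mult_left_mono) auto
    moreover have "\<bar>((b - b') * (b + b')) * (1/3 - ep s)\<bar> \<le> (\<bar>b - b'\<bar> * 2) * (1/3)"
      unfolding abs_mult using ab es by (intro mult_mono mult_left_mono) auto
    ultimately show ?thesis unfolding e by (rule tri2)
  qed
  have Y: "\<bar>b * (a - 1) - b' * (a' - 1)\<bar> \<le> 1 * \<bar>a - a'\<bar> + 1 * \<bar>b - b'\<bar>"
    using prod_lip[of b 1 "a' - 1" "a - 1" b'] ab by simp
  have "\<bar>G1 s u v - G1 s u' v'\<bar> = (1 / A s) * \<bar>(a * (2/3 + ep s - a) + b\<^sup>2 * (1/3 - ep s)) - (a' * (2/3 + ep s - a') + b'\<^sup>2 * (1/3 - ep s))\<bar>"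
  proof -
    have "G1 s u v - G1 s u' v' = (1 / A s) * ((a * (2/3 + ep s - a) + b\<^sup>2 * (1/3 - ep s)) - (a' * (2/3 + ep s - a') + b'\<^sup>2 * (1/3 - ep s)))"
      unfolding G1_def a_b_a'_b'_def by (rule right_diff_distrib[symmetric])
    then show ?thesis using As0 by (simp only: abs_mult) simp
  qed
  also have "\<dots> \<le> (1 / A t0) * (2 * \<bar>u - u'\<bar> + \<bar>v - v'\<bar>)"
    using inv X da db A0 As0 by (intro mult_mono) auto
  finally have g1: "\<bar>G1 s u v - G1 s u' v'\<bar> \<le> (1 / A t0) * (2 * \<bar>u - u'\<bar> + \<bar>v - v'\<bar>)" .
  have "\<bar>G2 s u v - G2 s u' v'\<bar> = (2 / A s) * \<bar>b * (a - 1) - b' * (a' - 1)\<bar>"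
  proof -
    have "G2 s u v - G2 s u' v' = (2 / A s) * (b * (a - 1) - b' * (a' - 1))"
      unfolding G2_def a_b_a'_b'_def by (simp only: mult.assoc right_diff_distrib[symmetric])
    then show ?thesis using As0 by (simp only: abs_mult) simp
  qed
  also have "\<dots> \<le> (2 / A t0) * (\<bar>u - u'\<bar> + \<bar>v - v'\<bar>)"
    using inv Y da db A0 As0 by (intro mult_mono) (auto simp: frac_le)
  finally have g2: "\<bar>G2 s u v - G2 s u' v'\<bar> \<le> (2 / A t0) * (\<bar>u - u'\<bar> + \<bar>v - v'\<bar>)" .
  have "(1 / A t0) * (2 * \<bar>u - u'\<bar> + \<bar>v - v'\<bar>) + (2 / A t0) * (\<bar>u - u'\<bar> + \<bar>v - v'\<bar>) \<le> 4 / A t0 * (\<bar>u - u'\<bar> + \<bar>v - v'\<bar>)"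
    using A0 by (simp add: field_simps)
  then show "\<bar>G1 s u v - G1 s u' v'\<bar> + \<bar>G2 s u v - G2 s u' v'\<bar> \<le> 4 / A t0 * (\<bar>u - u'\<bar> + \<bar>v - v'\<bar>)"
    using g1 g2 by linarith
next
  show "0 \<le> 4 / A t0" using Apos[OF t0] by simp
qed


definition F1 where "F1 t u v = (1 / A t) * (u * (2/3 + ep t - u) + v\<^sup>2 * (1/3 - ep t))"
definition F2 where "F2 t u v = (2 / A t) * v * (u - 1)"

lemma G_eq_F: "0 \<le> u \<Longrightarrow> u \<le> 1 \<Longrightarrow> 0 \<le> v \<Longrightarrow> v \<le> 1 \<Longrightarrow> G1 t u v = F1 t u v \<and> G2 t u v = F2 t u v"
  by (simp add: G1_def G2_def F1_def F2_def clampI_id)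

lemma choose_q:
  assumes "p < 1" "0 < m" "m < 1"
  shows "\<exists>q. p < q \<and> q < 1 \<and> m\<^sup>2 < q \<and> 1 - q \<le> 1/6 \<and>
      (\<forall>e. 0 < e \<longrightarrow> e \<le> ep t0 \<longrightarrow> q * (2/3 + e - q) + m\<^sup>2 * (1/3 - e) \<le> 0)"
proof -
  have e0: "0 < ep t0" "ep t0 < 1/3" using ep_pos ep_lt t0 by auto
  have m2: "m\<^sup>2 < 1" using assms by (simp add: power_less_one_iff abs_less_iff)
  define d where "d = min (min ((1-p)/2) ((1-m\<^sup>2)/2)) (min ((1/3 - ep t0) * (1-m\<^sup>2) / 2) (1/6))"
  have d0: "d > 0" unfolding d_def using assms m2 e0 by auto
  have d1a: "d \<le> (1-p)/2" unfolding d_def by (rule min.coboundedI1, rule min.cobounded1)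
  have d1b: "d \<le> (1-m\<^sup>2)/2" unfolding d_def by (rule min.coboundedI1, rule min.cobounded2)
  have d1c: "d \<le> (1/3 - ep t0) * (1-m\<^sup>2) / 2" unfolding d_def by (rule min.coboundedI2, rule min.cobounded1)
  have d1d: "d \<le> 1/6" unfolding d_def by (rule min.coboundedI2, rule min.cobounded2)
  note d1 = d1a d1b d1c d1d
  show ?thesis
  proof (intro exI[of _ "1 - d"] conjI allI impI)
    show "p < 1 - d" "1 - d < 1" "m\<^sup>2 < 1 - d" "1 - (1 - d) \<le> 1/6" using d0 d1 assms m2 by auto
    fix e :: real assume e: "0 < e" "e \<le> ep t0"
    define c where "c = e - 1/3"
    have c: "-1/3 < c" "c < 0" using e e0 by (auto simp: c_def)
    have eq: "(1 - d) * (2/3 + e - (1 - d)) + m\<^sup>2 * (1/3 - e) = c * (1 - m\<^sup>2) + d * (1 - c - d)"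
      by (simp add: c_def algebra_simps) (simp add: field_simps)
    have "d * (1 - c - d) \<le> d * (4/3)" using d0 c by (intro mult_left_mono) auto
    moreover have "d \<le> (-c) * (1 - m\<^sup>2) / 2"
    proof -
      have "(1/3 - ep t0) * (1-m\<^sup>2) \<le> (-c) * (1 - m\<^sup>2)" using e m2 by (intro mult_right_mono) (auto simp: c_def)
      then show ?thesis using d1(3) by simp
    qed
    moreover have "c * (1 - m\<^sup>2) \<le> 0" using c m2 by (simp add: mult_nonpos_nonneg)
    ultimately have "c * (1 - m\<^sup>2) + d * (1 - c - d) \<le> c * (1 - m\<^sup>2) * (1/3)" by (simp add: field_simps)
    also have "\<dots> \<le> 0" using c m2 by (simp add: mult_nonpos_nonneg)
    finally show "(1 - d) * (2/3 + e - (1 - d)) + m\<^sup>2 * (1/3 - e) \<le> 0" using eq by simp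
  qed
qed


lemma within_to_at:
  assumes "(f has_real_derivative D) (at x within {a..})" "a < (x::real)"
  shows "(f has_real_derivative D) (at x)"
proof -
  have "x \<in> interior {a..}" using assms(2) by simp
  then have "at x within {a..} = at x" by (rule at_within_interior)
  with assms(1) show ?thesis by simp
qed

lemma within_to_at2:
  assumes "(f has_real_derivative D) (at x within {a..<b})" "a < (x::real)" "x < b"
  shows "(f has_real_derivative D) (at x)"
proof -
  have "x \<in> interior {a..<b}" using assms(2,3) by simp
  then have "at x within {a..<b} = at x" by (rule at_within_interior)
  with assms(1) show ?thesis by simp
qed

lemma cont_from_deriv:
  assumes "\<And>t. t \<in> S \<Longrightarrow> \<exists>D. (f has_real_derivative D) (at t within S)"
  shows "continuous_on S f"
  unfolding continuous_on_eq_continuous_within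
  using assms DERIV_continuous by blast

lemma invariance:
  assumes R0: "2/3 < p" "p < 1" "0 < m" "m < 1"
    and q: "p < q" "q < 1" "m\<^sup>2 < q"
    and Qc: "\<forall>e. 0 < e \<longrightarrow> e \<le> ep t0 \<longrightarrow> q * (2/3 + e - q) + m\<^sup>2 * (1/3 - e) \<le> 0"
    and init: "\<phi> t0 = p" "\<psi> t0 = m"
    and der: "\<forall>t\<ge>t0. (\<phi> has_real_derivative G1 t (\<phi> t) (\<psi> t)) (at t within {t0..}) \<and>
                 (\<psi> has_real_derivative G2 t (\<phi> t) (\<psi> t)) (at t within {t0..})"
  shows "\<forall>t\<ge>t0. 2/3 < \<phi> t \<and> \<phi> t < q \<and> 0 < \<psi> t \<and> \<psi> t \<le> m"
proof -
  have A0: "A t0 > 0" using Apos[OF t0] .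
  have cphi: "continuous_on {t0..} \<phi>" and cpsi: "continuous_on {t0..} \<psi>"
    using der by (auto intro!: cont_from_deriv)
  have dat: "(\<phi> has_real_derivative G1 x (\<phi> x) (\<psi> x)) (at x) \<and> (\<psi> has_real_derivative G2 x (\<phi> x) (\<psi> x)) (at x)"
    if "t0 < x" for x
  proof -
    have "t0 \<le> x" using that by simp
    with der have "(\<phi> has_real_derivative G1 x (\<phi> x) (\<psi> x)) (at x within {t0..})"
        "(\<psi> has_real_derivative G2 x (\<phi> x) (\<psi> x)) (at x within {t0..})" by auto
    then show ?thesis using within_to_at that by blast
  qed
  define g where "g t = min (min (\<phi> t - 2/3) (q - \<phi> t)) (min (\<psi> t) (1 - \<psi> t))" for t
  have cg: "continuous_on {t0..} g" unfolding g_def by (intro continuous_intros cphi cpsi)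
  have g0: "g t0 > 0" unfolding g_def using R0 q init by auto
  have gpos: "g t > 0" if "t \<ge> t0" for t
  proof (rule barrier[OF cg g0 _ that])
    fix b assume b: "t0 < b" and H: "\<forall>s\<in>{t0..<b}. g s > 0"
    have Hs: "2/3 < \<phi> s \<and> \<phi> s < q \<and> 0 < \<psi> s \<and> \<psi> s < 1" if "s \<in> {t0..<b}" for s
      using H that unfolding g_def by auto
    have dF: "(\<phi> has_real_derivative F1 x (\<phi> x) (\<psi> x)) (at x) \<and> (\<psi> has_real_derivative F2 x (\<phi> x) (\<psi> x)) (at x)"
      if "t0 < x" "x < b" for x
    proof -
      have "x \<in> {t0..<b}" using that by simp
      from Hs[OF this] q have "0 \<le> \<phi> x" "\<phi> x \<le> 1" "0 \<le> \<psi> x" "\<psi> x \<le> 1" by auto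
      from G_eq_F[OF this] dat[OF that(1)] show ?thesis by simp
    qed
    have x0: "x > 0" "A x \<ge> A t0" "A x > 0" "1 / A x \<le> 1 / A t0" "0 < ep x" "ep x \<le> ep t0" if "t0 < x" for x
    proof -
      show "x > 0" using that t0 by simp
      show "A x \<ge> A t0" using Amono[OF t0] that by simp
      then show "A x > 0" using A0 by simp
      show "1 / A x \<le> 1 / A t0" using \<open>A x \<ge> A t0\<close> A0 by (simp add: frac_le)
      show "0 < ep x" using ep_pos that t0 by simp
      show "ep x \<le> ep t0" using emono[OF t0] that by simp
    qed
    have cb: "continuous_on {t0..b} \<phi>" "continuous_on {t0..b} \<psi>"
      using cphi cpsi by (auto elim: continuous_on_subset)
    have psi_le: "\<psi> y \<le> m" if "y \<in> {t0..b}" for y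
    proof -
      have "\<psi> t0 \<ge> \<psi> y"
      proof (rule DERIV_nonpos_imp_decreasing_open[of t0 y \<psi>])
        show "t0 \<le> y" using that by simp
        show "continuous_on {t0..y} \<psi>" using cb(2) that by (auto elim: continuous_on_subset)
        fix x assume x: "t0 < x" "x < y"
        then have xb: "x \<in> {t0..<b}" "x < b" using that by auto
        have "F2 x (\<phi> x) (\<psi> x) \<le> 0"
          unfolding F2_def using Hs[OF xb(1)] x0[OF x(1)] q
          by (intro mult_nonneg_nonpos) auto
        then show "\<exists>y. (\<psi> has_real_derivative y) (at x) \<and> y \<le> 0" using dF[OF x(1) xb(2)] by blast
      qed
      then show ?thesis using init by simp
    qed
    have psi_pos: "\<psi> b > 0"
    proof (rule grow_pos[where K="2 / A t0" and f'="\<lambda>x. F2 x (\<phi> x) (\<psi> x)" and f=\<psi> and a=t0 and b=b])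
      show "t0 \<le> b" using b by simp
      show "continuous_on {t0..b} \<psi>" by (fact cb(2))
      show "\<psi> t0 > 0" using init R0 by simp
      fix x assume x: "t0 < x" "x < b"
      have xb: "x \<in> {t0..<b}" using x by simp
      note h = Hs[OF xb] x0[OF x(1)] A0 q ep_lt[OF x0(1)[OF x(1)]]
      have "F2 x (\<phi> x) (\<psi> x) = - ((2 / A x) * (1 - \<phi> x)) * \<psi> x" using h unfolding F2_def by (simp add: field_simps)
      also have "\<dots> \<ge> - (2 / A t0) * \<psi> x"
      proof -
        have "(2 / A x) * (1 - \<phi> x) \<le> (2 / A t0) * 1"
          using h by (intro mult_mono) (auto simp: frac_le)
        then show ?thesis using h by (intro mult_right_mono) auto
      qed
      finally show "(\<psi> has_real_derivative F2 x (\<phi> x) (\<psi> x)) (at x) \<and> F2 x (\<phi> x) (\<psi> x) \<ge> - (2 / A t0) * \<psi> x"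
        using dF[OF x] by simp
    qed
    have phi_low: "\<phi> b - 2/3 > 0"
    proof (rule grow_pos[where K="1 / A t0" and f'="\<lambda>x. F1 x (\<phi> x) (\<psi> x)" and f="\<lambda>t. \<phi> t - 2/3" and a=t0 and b=b])
      show "t0 \<le> b" using b by simp
      show "continuous_on {t0..b} (\<lambda>t. \<phi> t - 2/3)" by (intro continuous_intros cb(1))
      show "\<phi> t0 - 2/3 > 0" using init R0 by simp
      fix x assume x: "t0 < x" "x < b"
      have xb: "x \<in> {t0..<b}" using x by simp
      note h = Hs[OF xb] x0[OF x(1)] A0 q ep_lt[OF x0(1)[OF x(1)]]
      have d: "((\<lambda>t. \<phi> t - 2/3) has_real_derivative F1 x (\<phi> x) (\<psi> x)) (at x)"
        using DERIV_diff[OF conjunct1[OF dF[OF x]] DERIV_const[of "2/3"]] by simp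
      have "F1 x (\<phi> x) (\<psi> x) = (1 / A x) * (\<phi> x * ep x + (\<psi> x)\<^sup>2 * (1/3 - ep x)) - ((1 / A x) * \<phi> x) * (\<phi> x - 2/3)"
        unfolding F1_def by (simp add: algebra_simps)
      also have "\<dots> \<ge> 0 - (1 / A t0) * (\<phi> x - 2/3)"
      proof (rule diff_mono)
        show "0 \<le> (1 / A x) * (\<phi> x * ep x + (\<psi> x)\<^sup>2 * (1/3 - ep x))"
          using h by (intro mult_nonneg_nonneg add_nonneg_nonneg) auto
        have "(1 / A x) * \<phi> x \<le> (1 / A t0) * 1" using h q by (intro mult_mono) auto
        then show "((1 / A x) * \<phi> x) * (\<phi> x - 2/3) \<le> (1 / A t0) * (\<phi> x - 2/3)"
          using h by (intro mult_right_mono) auto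
      qed
      finally show "((\<lambda>t. \<phi> t - 2/3) has_real_derivative F1 x (\<phi> x) (\<psi> x)) (at x) \<and> F1 x (\<phi> x) (\<psi> x) \<ge> - (1 / A t0) * (\<phi> x - 2/3)"
        using d by simp
    qed
    have phi_up: "q - \<phi> b > 0"
    proof (rule grow_pos[where K="2 / A t0" and f'="\<lambda>x. - F1 x (\<phi> x) (\<psi> x)" and f="\<lambda>t. q - \<phi> t" and a=t0 and b=b])
      show "t0 \<le> b" using b by simp
      show "continuous_on {t0..b} (\<lambda>t. q - \<phi> t)" by (intro continuous_intros cb(1))
      show "q - \<phi> t0 > 0" using init q by simp
      fix x assume x: "t0 < x" "x < b"
      have xb: "x \<in> {t0..<b}" using x by simp
      note h = Hs[OF xb] x0[OF x(1)] A0 q ep_lt[OF x0(1)[OF x(1)]]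
      have d: "((\<lambda>t. q - \<phi> t) has_real_derivative - F1 x (\<phi> x) (\<psi> x)) (at x)"
        using DERIV_diff[OF DERIV_const[of q] conjunct1[OF dF[OF x]]] by simp
      have psim: "(\<psi> x)\<^sup>2 \<le> m\<^sup>2" using h psi_le[of x] x b by (intro power_mono) auto
      have Qq: "q * (2/3 + ep x - q) + m\<^sup>2 * (1/3 - ep x) \<le> 0" using Qc h by blast
      have "\<phi> x * (2/3 + ep x - \<phi> x) + (\<psi> x)\<^sup>2 * (1/3 - ep x) \<le> \<phi> x * (2/3 + ep x - \<phi> x) + m\<^sup>2 * (1/3 - ep x)"
        using psim h by (intro add_left_mono mult_right_mono) auto
      also have "\<dots> = (q * (2/3 + ep x - q) + m\<^sup>2 * (1/3 - ep x)) + (q - \<phi> x) * (\<phi> x + q - 2/3 - ep x)"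
        by (simp add: algebra_simps) (simp add: field_simps)
      also have "\<dots> \<le> 0 + (q - \<phi> x) * 2"
        using Qq h q by (intro add_mono mult_left_mono) auto
      finally have Qb: "\<phi> x * (2/3 + ep x - \<phi> x) + (\<psi> x)\<^sup>2 * (1/3 - ep x) \<le> (q - \<phi> x) * 2" by simp
      have "F1 x (\<phi> x) (\<psi> x) \<le> (1 / A x) * ((q - \<phi> x) * 2)"
        unfolding F1_def using Qb h by (intro mult_left_mono) auto
      also have "\<dots> \<le> (1 / A t0) * ((q - \<phi> x) * 2)"
        using h by (intro mult_right_mono) auto
      finally have "F1 x (\<phi> x) (\<psi> x) \<le> (1 / A t0) * ((q - \<phi> x) * 2)" .
      moreover have eqq: "(2 / A t0) * (q - \<phi> x) = (1 / A t0) * ((q - \<phi> x) * 2)" by simp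
      ultimately have "F1 x (\<phi> x) (\<psi> x) \<le> (2 / A t0) * (q - \<phi> x)" by (simp only: eqq)
      then show "((\<lambda>t. q - \<phi> t) has_real_derivative - F1 x (\<phi> x) (\<psi> x)) (at x) \<and> - F1 x (\<phi> x) (\<psi> x) \<ge> - (2 / A t0) * (q - \<phi> x)"
        using d by simp
    qed
    have "\<psi> b \<le> m" using psi_le[of b] b by simp
    then show "g b > 0" unfolding g_def using psi_pos phi_low phi_up R0 by auto
  qed
  show ?thesis
  proof (intro allI impI)
    fix t assume t: "t \<ge> t0"
    have "\<psi> t \<le> m"
    proof -
      have "\<psi> t0 \<ge> \<psi> t"
      proof (rule DERIV_nonpos_imp_decreasing_open[of t0 t \<psi>])
        show "t0 \<le> t" using t by simp
        show "continuous_on {t0..t} \<psi>" using cpsi by (auto elim: continuous_on_subset)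
        fix x assume x: "t0 < x" "x < t"
        have gx: "g x > 0" using gpos x by simp
        then have h: "2/3 < \<phi> x" "\<phi> x < q" "0 < \<psi> x" "\<psi> x < 1" unfolding g_def by auto
        have "A x > 0" using Apos x t0 by simp
        then have "F2 x (\<phi> x) (\<psi> x) \<le> 0" unfolding F2_def using h q by (intro mult_nonneg_nonpos) auto
        moreover have "G2 x (\<phi> x) (\<psi> x) = F2 x (\<phi> x) (\<psi> x)" using G_eq_F[of "\<phi> x" "\<psi> x" x] h q by simp
        ultimately show "\<exists>y. (\<psi> has_real_derivative y) (at x) \<and> y \<le> 0" using dat[OF x(1)] by auto
      qed
      then show ?thesis using init by simp
    qed
    then show "2/3 < \<phi> t \<and> \<phi> t < q \<and> 0 < \<psi> t \<and> \<psi> t \<le> m" using gpos[OF t] unfolding g_def by auto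
  qed
qed


lemma F_lip:
  assumes s: "t0 \<le> s" and R: "\<bar>u\<bar> \<le> R" "\<bar>v\<bar> \<le> R" "\<bar>u'\<bar> \<le> R" "\<bar>v'\<bar> \<le> R"
  shows "\<bar>F1 s u v - F1 s u' v'\<bar> \<le> (2 * (R + 1) / A t0) * (\<bar>u - u'\<bar> + \<bar>v - v'\<bar>) \<and>
         \<bar>F2 s u v - F2 s u' v'\<bar> \<le> (2 * (R + 1) / A t0) * (\<bar>u - u'\<bar> + \<bar>v - v'\<bar>)"
proof -
  have A0: "A t0 > 0" using Apos[OF t0] .
  have As: "A s \<ge> A t0" using Amono[OF t0 s] .
  have As0: "A s > 0" using A0 As by simp
  have es: "0 < ep s" "ep s < 1/3" using ep_pos ep_lt s t0 by auto
  have inv: "1 / A s \<le> 1 / A t0" using As A0 by (simp add: frac_le)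
  have R0: "R \<ge> 0" using R by simp
  have X: "\<bar>(u * (2/3 + ep s - u) + v\<^sup>2 * (1/3 - ep s)) - (u' * (2/3 + ep s - u') + v'\<^sup>2 * (1/3 - ep s))\<bar> \<le> (2 * (R + 1)) * (\<bar>u - u'\<bar> + \<bar>v - v'\<bar>)"
  proof -
    have e: "(u * (2/3 + ep s - u) + v\<^sup>2 * (1/3 - ep s)) - (u' * (2/3 + ep s - u') + v'\<^sup>2 * (1/3 - ep s))
          = (u - u') * (2/3 + ep s - u - u') + ((v - v') * (v + v')) * (1/3 - ep s)"
      by (simp add: algebra_simps power2_eq_square) (simp add: field_simps)
    have b1: "\<bar>2/3 + ep s - u - u'\<bar> \<le> 2 * (R + 1)" using R es by (simp add: abs_le_iff; linarith)
    have "\<bar>(u - u') * (2/3 + ep s - u - u')\<bar> \<le> \<bar>u - u'\<bar> * (2 * (R + 1))"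
      unfolding abs_mult using b1 by (intro mult_left_mono) auto
    moreover have "\<bar>((v - v') * (v + v')) * (1/3 - ep s)\<bar> \<le> (\<bar>v - v'\<bar> * (2 * (R + 1))) * 1"
    proof -
      have "\<bar>v + v'\<bar> \<le> 2 * (R + 1)" using R by (simp add: abs_le_iff; linarith)
      moreover have "\<bar>1/3 - ep s\<bar> \<le> 1" using es by simp
      ultimately show ?thesis unfolding abs_mult using R0
        by (intro mult_mono mult_left_mono) auto
    qed
    ultimately have "\<bar>(u - u') * (2/3 + ep s - u - u') + ((v - v') * (v + v')) * (1/3 - ep s)\<bar>
        \<le> \<bar>u - u'\<bar> * (2 * (R + 1)) + (\<bar>v - v'\<bar> * (2 * (R + 1))) * 1"
      by (rule abs_triangle_ineq[THEN order_trans, OF add_mono])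
    then show ?thesis unfolding e by (simp add: algebra_simps)
  qed
  have "F1 s u v - F1 s u' v' = (1 / A s) * ((u * (2/3 + ep s - u) + v\<^sup>2 * (1/3 - ep s)) - (u' * (2/3 + ep s - u') + v'\<^sup>2 * (1/3 - ep s)))"
    unfolding F1_def by (rule right_diff_distrib[symmetric])
  then have "\<bar>F1 s u v - F1 s u' v'\<bar> = (1 / A s) * \<bar>(u * (2/3 + ep s - u) + v\<^sup>2 * (1/3 - ep s)) - (u' * (2/3 + ep s - u') + v'\<^sup>2 * (1/3 - ep s))\<bar>"
    using As0 by (simp only: abs_mult) simp
  also have "\<dots> \<le> (1 / A t0) * ((2 * (R + 1)) * (\<bar>u - u'\<bar> + \<bar>v - v'\<bar>))"
    using inv X As0 A0 by (intro mult_mono) auto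
  finally have g1: "\<bar>F1 s u v - F1 s u' v'\<bar> \<le> (2 * (R + 1) / A t0) * (\<bar>u - u'\<bar> + \<bar>v - v'\<bar>)" by simp
  have Y: "\<bar>v * (u - 1) - v' * (u' - 1)\<bar> \<le> (R + 1) * \<bar>u - u'\<bar> + (R + 1) * \<bar>v - v'\<bar>"
    using prod_lip[of v "R + 1" "u' - 1" "u - 1" v'] R by (simp add: abs_le_iff) 
  have "F2 s u v - F2 s u' v' = (2 / A s) * (v * (u - 1) - v' * (u' - 1))"
    unfolding F2_def by (simp only: mult.assoc right_diff_distrib[symmetric])
  then have "\<bar>F2 s u v - F2 s u' v'\<bar> = (2 / A s) * \<bar>v * (u - 1) - v' * (u' - 1)\<bar>"
    using As0 by (simp only: abs_mult) simp
  also have "\<dots> \<le> (2 / A t0) * ((R + 1) * \<bar>u - u'\<bar> + (R + 1) * \<bar>v - v'\<bar>)"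
    using inv Y A0 As0 by (intro mult_mono) (auto simp: frac_le)
  also have "(2 / A t0) * ((R + 1) * \<bar>u - u'\<bar> + (R + 1) * \<bar>v - v'\<bar>) = (2 * (R + 1) / A t0) * (\<bar>u - u'\<bar> + \<bar>v - v'\<bar>)"
    using A0 by (simp add: field_simps)
  finally have g2: "\<bar>F2 s u v - F2 s u' v'\<bar> \<le> (2 * (R + 1) / A t0) * (\<bar>u - u'\<bar> + \<bar>v - v'\<bar>)" .
  show ?thesis using g1 g2 by simp
qed

lemma uniqueness:
  assumes solF: "\<forall>t\<ge>t0. (\<phi> has_real_derivative F1 t (\<phi> t) (\<psi> t)) (at t within {t0..}) \<and>
                 (\<psi> has_real_derivative F2 t (\<phi> t) (\<psi> t)) (at t within {t0..})"
    and solg: "instanton_sol A B gp gm {t0..<T}"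
    and init: "gp t0 = \<phi> t0" "gm t0 = \<psi> t0"
    and t: "t \<in> {t0..<T}"
  shows "gp t = \<phi> t \<and> gm t = \<psi> t"
proof (cases "t = t0")
  case True then show ?thesis using init by simp
next
  case False
  then have tt: "t0 < t" "t < T" using t by auto
  have A0: "A t0 > 0" using Apos[OF t0] .
  have dg: "(gp has_real_derivative F1 x (gp x) (gm x)) (at x) \<and> (gm has_real_derivative F2 x (gp x) (gm x)) (at x)"
    if "t0 < x" "x < T" for x
  proof -
    have "x \<in> {t0..<T}" "x > 0" using that t0 by auto
    moreover have "fplus_rhs (A x) (B x) (gp x) (gm x) = F1 x (gp x) (gm x)"
      "fminus_rhs (A x) (B x) (gp x) (gm x) = F2 x (gp x) (gm x)"
      using fplus_eq[OF \<open>x > 0\<close>] fminus_eq[OF \<open>x > 0\<close>] by (simp_all add: F1_def F2_def)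
    moreover have "(gp has_real_derivative fplus_rhs (A x) (B x) (gp x) (gm x)) (at x within {t0..<T})"
      "(gm has_real_derivative fminus_rhs (A x) (B x) (gp x) (gm x)) (at x within {t0..<T})"
      using solg \<open>x \<in> {t0..<T}\<close> unfolding instanton_sol_def by auto
    ultimately have "(gp has_real_derivative F1 x (gp x) (gm x)) (at x within {t0..<T})"
      "(gm has_real_derivative F2 x (gp x) (gm x)) (at x within {t0..<T})"
      by simp_all
    then show ?thesis using within_to_at2 that by blast
  qed
  have df: "(\<phi> has_real_derivative F1 x (\<phi> x) (\<psi> x)) (at x) \<and> (\<psi> has_real_derivative F2 x (\<phi> x) (\<psi> x)) (at x)"
    if "t0 < x" for x
  proof -
    have "t0 \<le> x" using that by simp
    with solF have "(\<phi> has_real_derivative F1 x (\<phi> x) (\<psi> x)) (at x within {t0..})"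
        "(\<psi> has_real_derivative F2 x (\<phi> x) (\<psi> x)) (at x within {t0..})" by auto
    then show ?thesis using within_to_at that by blast
  qed
  have cg: "continuous_on {t0..<T} gp" "continuous_on {t0..<T} gm"
    using solg unfolding instanton_sol_def by (auto intro!: cont_from_deriv)
  have cf: "continuous_on {t0..} \<phi>" "continuous_on {t0..} \<psi>"
    using solF by (auto intro!: cont_from_deriv)
  have sub: "{t0..t} \<subseteq> {t0..<T}" "{t0..t} \<subseteq> {t0..}" using tt by auto
  have c4: "continuous_on {t0..t} gp" "continuous_on {t0..t} gm" "continuous_on {t0..t} \<phi>" "continuous_on {t0..t} \<psi>"
    using cg cf sub by (auto elim: continuous_on_subset)
  obtain R1 where R1: "\<forall>s\<in>{t0..t}. \<bar>gp s\<bar> \<le> R1" using bounded_on_Icc[OF c4(1)] by blast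
  obtain R2 where R2: "\<forall>s\<in>{t0..t}. \<bar>gm s\<bar> \<le> R2" using bounded_on_Icc[OF c4(2)] by blast
  obtain R3 where R3: "\<forall>s\<in>{t0..t}. \<bar>\<phi> s\<bar> \<le> R3" using bounded_on_Icc[OF c4(3)] by blast
  obtain R4 where R4: "\<forall>s\<in>{t0..t}. \<bar>\<psi> s\<bar> \<le> R4" using bounded_on_Icc[OF c4(4)] by blast
  define R where "R = max (max R1 R2) (max R3 R4)"
  have Rb: "\<bar>gp s\<bar> \<le> R" "\<bar>gm s\<bar> \<le> R" "\<bar>\<phi> s\<bar> \<le> R" "\<bar>\<psi> s\<bar> \<le> R" if "s \<in> {t0..t}" for s
    using R1 R2 R3 R4 that unfolding R_def by fastforce+
  define K where "K = 2 * (R + 1) / A t0"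
  have K0: "K \<ge> 0" unfolding K_def using Rb[of t0] tt A0 by auto
  define d where "d s = (gp s - \<phi> s)\<^sup>2 + (gm s - \<psi> s)\<^sup>2" for s
  have "d t \<le> 0"
  proof (rule decay_zero[where K="4 * K" and a=t0 and b=t and d=d])
    show "t0 \<le> t" using tt by simp
    show "continuous_on {t0..t} d" unfolding d_def by (intro continuous_intros c4)
    show "d t0 = 0" unfolding d_def using init by simp
    fix x assume x: "t0 < x" "x < t"
    have xs: "x \<in> {t0..t}" using x by simp
    define f1 where "f1 = F1 x (gp x) (gm x) - F1 x (\<phi> x) (\<psi> x)"
    define f2 where "f2 = F2 x (gp x) (gm x) - F2 x (\<phi> x) (\<psi> x)"
    have "(d has_real_derivative 2 * (gp x - \<phi> x) * f1 + 2 * (gm x - \<psi> x) * f2) (at x)"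
      unfolding d_def f1_def f2_def using dg[of x] df[of x] x tt
      by (auto intro!: derivative_eq_intros) (simp add: algebra_simps)
    moreover have "2 * (gp x - \<phi> x) * f1 + 2 * (gm x - \<psi> x) * f2 \<le> 4 * K * d x"
      unfolding d_def
    proof (rule sq_bound[OF _ _ K0])
      have L: "\<bar>F1 x (gp x) (gm x) - F1 x (\<phi> x) (\<psi> x)\<bar> \<le> K * (\<bar>gp x - \<phi> x\<bar> + \<bar>gm x - \<psi> x\<bar>) \<and>
               \<bar>F2 x (gp x) (gm x) - F2 x (\<phi> x) (\<psi> x)\<bar> \<le> K * (\<bar>gp x - \<phi> x\<bar> + \<bar>gm x - \<psi> x\<bar>)"
        unfolding K_def using x by (intro F_lip Rb[OF xs]) simp
      show "\<bar>f1\<bar> \<le> K * (\<bar>gp x - \<phi> x\<bar> + \<bar>gm x - \<psi> x\<bar>)" unfolding f1_def using L by blast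
      show "\<bar>f2\<bar> \<le> K * (\<bar>gp x - \<phi> x\<bar> + \<bar>gm x - \<psi> x\<bar>)" unfolding f2_def using L by blast
    qed
    ultimately show "(d has_real_derivative 2 * (gp x - \<phi> x) * f1 + 2 * (gm x - \<psi> x) * f2) (at x) \<and>
        2 * (gp x - \<phi> x) * f1 + 2 * (gm x - \<psi> x) * f2 \<le> 4 * K * d x" by simp
  qed
  moreover have "d t \<ge> 0" unfolding d_def by simp
  ultimately have "d t = 0" by simp
  then show ?thesis unfolding d_def by (simp add: add_nonneg_eq_0_iff)
qed

end



lemma mono_dec:
  fixes W W' :: "real \<Rightarrow> real"
  assumes "\<And>x. a \<le> x \<Longrightarrow> (W has_real_derivative W' x) (at x)" "\<And>x. a \<le> x \<Longrightarrow> W' x \<le> 0" "a \<le> s" "s \<le> t"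
  shows "W t \<le> W s"
proof (rule DERIV_nonpos_imp_nonincreasing[of s t W])
  show "s \<le> t" by fact
  fix x assume "s \<le> x" "x \<le> t"
  then have "a \<le> x" using assms(3) by simp
  then show "\<exists>y. (W has_real_derivative y) (at x) \<and> y \<le> 0" using assms(1,2) by blast
qed

lemma mono_inc:
  fixes W W' :: "real \<Rightarrow> real"
  assumes "\<And>x. a \<le> x \<Longrightarrow> (W has_real_derivative W' x) (at x)" "\<And>x. a \<le> x \<Longrightarrow> W' x \<ge> 0" "a \<le> s" "s \<le> t"
  shows "W s \<le> W t"
proof (rule DERIV_nonneg_imp_nondecreasing[of s t W])
  show "s \<le> t" by fact
  fix x assume "s \<le> x" "x \<le> t"
  then have "a \<le> x" using assms(3) by simp
  then show "\<exists>y. (W has_real_derivative y) (at x) \<and> 0 \<le> y" using assms(1,2) by blast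
qed

lemma sup_sandwich:
  fixes h g :: "real \<Rightarrow> real"
  assumes hm: "\<And>s t. a \<le> s \<Longrightarrow> s \<le> t \<Longrightarrow> h s \<le> h t"
    and gm: "\<And>s t. a \<le> s \<Longrightarrow> s \<le> t \<Longrightarrow> g t \<le> g s"
    and hg: "\<And>t. a \<le> t \<Longrightarrow> h t \<le> g t"
  shows "\<exists>L. \<forall>t\<ge>a. h t \<le> L \<and> L \<le> g t"
proof (intro exI allI impI conjI)
  have bdd: "bdd_above (h ` {a..})"
    by (rule bdd_aboveI[of _ "g a"]) (use hg gm in force)
  fix t assume t: "a \<le> t"
  show "h t \<le> (SUP s\<in>{a..}. h s)" by (rule cSUP_upper) (use t bdd in auto)
  show "(SUP s\<in>{a..}. h s) \<le> g t"
  proof (rule cSUP_least)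
    show "{a..} \<noteq> {}" by auto
    fix s assume s: "s \<in> {a..}"
    show "h s \<le> g t"
    proof (cases "s \<le> t")
      case True then show ?thesis using hm[of s t] hg[OF t] s by force
    next
      case False then show ?thesis using hg[of s] gm[of t s] s t by force
    qed
  qed
qed

lemma exp_diff_le: fixes y z :: real assumes "z \<le> y" shows "exp y - exp z \<le> exp y * (y - z)"
proof -
  have "exp z = exp y * exp (z - y)" by (simp add: exp_diff)
  moreover have "exp (z - y) \<ge> 1 + (z - y)" by (rule exp_ge_add_one_self)
  ultimately have "exp z \<ge> exp y * (1 + (z - y))" by simp
  then show ?thesis by (simp add: algebra_simps)
qed

lemma bigO_from:
  fixes f :: "real \<Rightarrow> real"
  assumes "\<And>t. t \<ge> T \<Longrightarrow> \<bar>f t\<bar> \<le> C / t ^ 3" "T > 0"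
  shows "f \<in> O[at_top](\<lambda>t. 1 / t ^ 3)"
proof (rule bigoI[where c=C])
  show "\<forall>\<^sub>F x in at_top. norm (f x) \<le> C * norm (1 / x ^ 3)"
    unfolding eventually_at_top_linorder
  proof (intro exI[of _ T] allI impI)
    fix t assume t: "t \<ge> T"
    then have "t > 0" using assms(2) by simp
    then show "norm (f t) \<le> C * norm (1 / t ^ 3)" using assms(1)[OF t] by simp
  qed
qed

lemma lim_from:
  fixes f :: "real \<Rightarrow> real"
  assumes "\<And>t. t \<ge> T \<Longrightarrow> \<bar>f t - c\<bar> \<le> C / t\<^sup>2"
  shows "(f \<longlongrightarrow> c) at_top"
proof -
  have "((\<lambda>t. f t - c) \<longlongrightarrow> 0) at_top"
  proof (rule Lim_null_comparison)
    show "\<forall>\<^sub>F t in at_top. norm (f t - c) \<le> C / t\<^sup>2"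
      unfolding eventually_at_top_linorder using assms by auto
    show "((\<lambda>t. C / t\<^sup>2) \<longlongrightarrow> 0) at_top" by real_asymp
  qed
  from tendsto_add[OF this tendsto_const[of c]] show ?thesis by simp
qed

locale solctx = sysl +
  fixes \<phi> \<psi> :: "real \<Rightarrow> real" and q :: real
  assumes dphi: "\<And>t. t0 < t \<Longrightarrow> (\<phi> has_real_derivative F1 t (\<phi> t) (\<psi> t)) (at t)"
    and dpsi: "\<And>t. t0 < t \<Longrightarrow> (\<psi> has_real_derivative F2 t (\<phi> t) (\<psi> t)) (at t)"
    and bnds: "\<And>t. t0 \<le> t \<Longrightarrow> 2/3 < \<phi> t \<and> \<phi> t < q \<and> 0 < \<psi> t \<and> \<psi> t < 1"
    and q1: "q < 1" "1 - q \<le> 1/6"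
begin

definition "T1 = t0 + 3"
definition "Ad t = 1/3 + ep t / 2"
definition "xx t = \<phi> t - 2/3"
definition "Dphi t = A t * (ep t * (xx t + \<phi> t) - (xx t)\<^sup>2 + (\<psi> t)\<^sup>2 * (1/3 - ep t))"

lemma T1: "T1 > t0" "T1 > 0" unfolding T1_def using t0 by auto

lemma Abig: assumes "T1 \<le> t" shows "A t \<ge> 1" "A t > 0" "A t \<ge> A T1 + (t - T1) / 3"
proof -
  have "A t0 + (t - t0) / 3 \<le> A t" using Agrow[OF t0] assms T1 by simp
  moreover have "A t0 > 0" using Apos[OF t0] .
  moreover have "t - t0 \<ge> 3" using assms unfolding T1_def by simp
  ultimately show "A t \<ge> 1" by (simp add: field_simps)
  then show "A t > 0" by simp
  show "A t \<ge> A T1 + (t - T1) / 3" using Agrow[of T1 t] T1 assms by simp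
qed

lemma pts: assumes "T1 \<le> t" shows "t0 < t" "t > 0" "0 < ep t" "ep t < 1/3" "ep t \<le> 1 / (81 * A t ^ 3)"
  "1/3 \<le> Ad t" "Ad t \<le> 1/2" "0 < xx t" "xx t < 1/3" "0 < \<psi> t" "\<psi> t < 1" "2/3 < \<phi> t" "\<phi> t < 1"
proof -
  show t: "t0 < t" "t > 0" using assms T1 by auto
  show "0 < ep t" "ep t < 1/3" "ep t \<le> 1 / (81 * A t ^ 3)" using ep_pos ep_lt ep_le t by auto
  then show "1/3 \<le> Ad t" "Ad t \<le> 1/2" unfolding Ad_def by auto
  show "0 < xx t" "xx t < 1/3" "0 < \<psi> t" "\<psi> t < 1" "2/3 < \<phi> t" "\<phi> t < 1"
    using bnds[of t] t q1 unfolding xx_def by auto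
qed

lemma dA: "T1 \<le> t \<Longrightarrow> (A has_real_derivative Ad t) (at t)"
  unfolding Ad_def using Ader pts by blast

lemma dPhi: assumes "T1 \<le> t" shows "((\<lambda>t. (A t)\<^sup>2 * xx t) has_real_derivative Dphi t) (at t)"
proof -
  note p = pts[OF assms] Abig[OF assms]
  have xd: "(xx has_real_derivative F1 t (\<phi> t) (\<psi> t)) (at t)"
    unfolding xx_def[abs_def] using dphi[OF p(1)] by (auto intro!: derivative_eq_intros)
  have "((\<lambda>t. (A t)\<^sup>2 * xx t) has_real_derivative 2 * A t * Ad t * xx t + (A t)\<^sup>2 * F1 t (\<phi> t) (\<psi> t)) (at t)"
    using dA[OF assms] xd by (auto intro!: derivative_eq_intros)
  moreover have "2 * A t * Ad t * xx t + (A t)\<^sup>2 * F1 t (\<phi> t) (\<psi> t) = Dphi t"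
    using p unfolding Dphi_def F1_def Ad_def xx_def by (simp add: field_simps power2_eq_square)
  ultimately show ?thesis by simp
qed

lemma dlnpsi: assumes "T1 \<le> t" shows "((\<lambda>t. ln (\<psi> t)) has_real_derivative 2 * (\<phi> t - 1) / A t) (at t)"
proof -
  note p = pts[OF assms] Abig[OF assms]
  have "((\<lambda>t. ln (\<psi> t)) has_real_derivative F2 t (\<phi> t) (\<psi> t) / \<psi> t) (at t)"
    using dpsi[OF p(1)] p by (auto intro!: derivative_eq_intros)
  moreover have "F2 t (\<phi> t) (\<psi> t) / \<psi> t = 2 * (\<phi> t - 1) / A t" using p unfolding F2_def by (simp add: field_simps)
  ultimately show ?thesis by simp
qed

lemma dlnA: assumes "T1 \<le> t" shows "((\<lambda>t. ln (A t)) has_real_derivative Ad t / A t) (at t)"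
  using dA[OF assms] Abig[OF assms] by (auto intro!: derivative_eq_intros)

lemma dP: assumes "T1 \<le> t" shows "((\<lambda>t. A t powr g) has_real_derivative g * A t powr (g - 1) * Ad t) (at t)"
  using DERIV_fun_powr[OF dA[OF assms] Abig(2)[OF assms], of g] by simp


definition "\<beta> = 3 * (1 - q)"

lemma beta: "0 < \<beta>" "\<beta> \<le> 1/2" unfolding \<beta>_def using q1 by auto

lemma Apowr_exp: assumes "T1 \<le> t" shows "A t powr g = exp (g * ln (A t))"
proof -
  have "A t > 0" by (rule Abig(2)[OF assms])
  then show ?thesis by (simp add: powr_def)
qed

lemma psi_decay: "\<exists>C>0. \<forall>t\<ge>T1. \<psi> t \<le> C * A t powr (- \<beta>)"
proof -
  define W where "W t = ln (\<psi> t) + \<beta> * ln (A t)" for t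
  have Wd: "(W has_real_derivative 2 * (\<phi> x - 1) / A x + \<beta> * (Ad x / A x)) (at x)" if "T1 \<le> x" for x
    unfolding W_def[abs_def] by (rule DERIV_add[OF dlnpsi[OF that] DERIV_cmult[OF dlnA[OF that]]])
  have Wn: "2 * (\<phi> x - 1) / A x + \<beta> * (Ad x / A x) \<le> 0" if "T1 \<le> x" for x
  proof -
    note p = pts[OF that] Abig[OF that]
    have "\<phi> x < q" using bnds[of x] p by simp
    moreover have "\<beta> * Ad x \<le> \<beta> * (1/2)" using p beta by (intro mult_left_mono) auto
    ultimately have "2 * (\<phi> x - 1) + \<beta> * Ad x \<le> 2 * (q - 1) + \<beta> * (1/2)" by (intro add_mono) auto
    also have "2 * (q - 1) + \<beta> * (1/2) = - (1 - q) / 2" unfolding \<beta>_def by (simp add: field_simps)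
    also have "\<dots> \<le> 0" using q1 by simp
    finally have "2 * (\<phi> x - 1) + \<beta> * Ad x \<le> 0" .
    then have "(2 * (\<phi> x - 1) + \<beta> * Ad x) / A x \<le> 0" using p by (simp add: divide_nonpos_pos)
    then show ?thesis by (simp add: add_divide_distrib)
  qed
  show ?thesis
  proof (intro exI[of _ "exp (W T1)"] conjI allI impI)
    show "exp (W T1) > 0" by simp
    fix t assume t: "T1 \<le> t"
    have "W t \<le> W T1" by (rule mono_dec[OF Wd Wn order_refl t])
    then have "ln (\<psi> t) \<le> W T1 - \<beta> * ln (A t)" unfolding W_def by simp
    then have "exp (ln (\<psi> t)) \<le> exp (W T1 - \<beta> * ln (A t))" by simp
    also have "\<dots> = exp (W T1) * A t powr (- \<beta>)" using Apowr_exp[OF t] by (simp add: exp_diff exp_minus divide_inverse)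
    finally show "\<psi> t \<le> exp (W T1) * A t powr (- \<beta>)" using pts[OF t] by simp
  qed
qed


lemma Ap: assumes "T1 \<le> t"
  shows "A t powr 1 = A t" "A t powr a * A t powr b = A t powr (a + b)" "A t powr g > 0"
    "0 \<le> g \<Longrightarrow> 1 \<le> A t powr g" "a \<le> b \<Longrightarrow> A t powr a \<le> A t powr b"
    "A t powr 2 = (A t)\<^sup>2" "A t powr (- g) = 1 / A t powr g"
proof -
  have A1: "A t \<ge> 1" "A t > 0" using Abig[OF assms] by auto
  show "A t powr 1 = A t" using A1 by (simp add: powr_one)
  show "A t powr a * A t powr b = A t powr (a + b)" by (simp add: powr_add)
  show "A t powr g > 0" using A1 by simp
  show "0 \<le> g \<Longrightarrow> 1 \<le> A t powr g" using A1 by (simp add: ge_one_powr_ge_zero)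
  show "a \<le> b \<Longrightarrow> A t powr a \<le> A t powr b" using A1 by (intro powr_mono) auto
  show "A t powr 2 = (A t)\<^sup>2" using A1 by simp
  show "A t powr (- g) = 1 / A t powr g" by (simp add: powr_minus divide_inverse)
qed

lemma Dphi_up: assumes "T1 \<le> t" shows "Dphi t \<le> 2 / (81 * (A t)\<^sup>2) + A t * (\<psi> t)\<^sup>2 / 3"
proof -
  note p = pts[OF assms] Abig[OF assms]
  have "ep t * (xx t + \<phi> t) - (xx t)\<^sup>2 + (\<psi> t)\<^sup>2 * (1/3 - ep t) \<le> ep t * 2 + (\<psi> t)\<^sup>2 * (1/3)"
  proof -
    have "ep t * (xx t + \<phi> t) \<le> ep t * 2" using p by (intro mult_left_mono) auto
    moreover have "(\<psi> t)\<^sup>2 * (1/3 - ep t) \<le> (\<psi> t)\<^sup>2 * (1/3)" using p by (intro mult_left_mono) auto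
    moreover have "(xx t)\<^sup>2 \<ge> 0" by simp
    ultimately show ?thesis by linarith
  qed
  then have "Dphi t \<le> A t * (ep t * 2 + (\<psi> t)\<^sup>2 * (1/3))" unfolding Dphi_def using p by (intro mult_left_mono) auto
  also have "\<dots> = 2 * (A t * ep t) + A t * (\<psi> t)\<^sup>2 / 3" by (simp add: algebra_simps)
  also have "A t * ep t \<le> 1 / (81 * (A t)\<^sup>2)"
  proof -
    have "A t * ep t \<le> A t * (1 / (81 * A t ^ 3))" using p by (intro mult_left_mono) auto
    also have "\<dots> = 1 / (81 * (A t)\<^sup>2)" using p by (simp add: field_simps power2_eq_square power3_eq_cube)
    finally show ?thesis .
  qed
  finally show ?thesis by simp
qed

lemma x_decay: "\<exists>C>0. \<forall>t\<ge>T1. xx t \<le> C * A t powr (- 2 * \<beta>)"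
proof -
  obtain Cb where Cb: "Cb > 0" "\<And>t. T1 \<le> t \<Longrightarrow> \<psi> t \<le> Cb * A t powr (- \<beta>)" using psi_decay by blast
  define c1 where "c1 = 2/81 + Cb\<^sup>2/3"
  define Kc where "Kc = 3 * c1"
  have c1: "c1 > 0" unfolding c1_def by (intro add_pos_nonneg) auto
  define W where "W t = (A t)\<^sup>2 * xx t - Kc * A t powr (2 - 2 * \<beta>)" for t
  have Wd: "(W has_real_derivative Dphi x - Kc * ((2 - 2 * \<beta>) * A x powr (2 - 2 * \<beta> - 1) * Ad x)) (at x)" if "T1 \<le> x" for x
    unfolding W_def[abs_def] by (rule DERIV_diff[OF dPhi[OF that] DERIV_cmult[OF dP[OF that]]])
  have Wn: "Dphi x - Kc * ((2 - 2 * \<beta>) * A x powr (2 - 2 * \<beta> - 1) * Ad x) \<le> 0" if "T1 \<le> x" for x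
  proof -
    note p = pts[OF that] Abig[OF that] Ap[OF that]
    have e: "2 - 2 * \<beta> - 1 = 1 - 2 * \<beta>" by simp
    have P1: "A x powr (1 - 2 * \<beta>) \<ge> 1" using Ap(4)[OF that, of "1 - 2 * \<beta>"] beta by simp
    have "2 / (81 * (A x)\<^sup>2) \<le> 2 / 81" using p by (simp add: field_simps)
    also have "\<dots> \<le> 2 / 81 * A x powr (1 - 2 * \<beta>)" using P1 by simp
    finally have t1: "2 / (81 * (A x)\<^sup>2) \<le> 2 / 81 * A x powr (1 - 2 * \<beta>)" .
    have "(\<psi> x)\<^sup>2 \<le> (Cb * A x powr (- \<beta>))\<^sup>2" using Cb(2)[OF that] p by (intro power_mono) auto
    also have "\<dots> = Cb\<^sup>2 * A x powr (- 2 * \<beta>)"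
      using Ap(2)[OF that, of "-\<beta>" "-\<beta>"] by (simp add: power2_eq_square algebra_simps)
    finally have "A x * (\<psi> x)\<^sup>2 \<le> A x * (Cb\<^sup>2 * A x powr (- 2 * \<beta>))" using p by (intro mult_left_mono) auto
    also have "\<dots> = Cb\<^sup>2 * A x powr (1 - 2 * \<beta>)"
      using Ap(2)[OF that, of 1 "- 2 * \<beta>"] Ap(1)[OF that] by (simp add: algebra_simps)
    finally have t2: "A x * (\<psi> x)\<^sup>2 / 3 \<le> Cb\<^sup>2 / 3 * A x powr (1 - 2 * \<beta>)" by simp
    have "Dphi x \<le> c1 * A x powr (1 - 2 * \<beta>)"
      using Dphi_up[OF that] t1 t2 unfolding c1_def by (simp add: algebra_simps)
    also have "c1 * A x powr (1 - 2 * \<beta>) \<le> Kc * ((2 - 2 * \<beta>) * A x powr (1 - 2 * \<beta>) * Ad x)"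
    proof -
      have b2: "1 \<le> 2 - 2 * \<beta>" using beta by simp
      have ad: "1/3 \<le> Ad x" using pts[OF that] by simp
      have "1 * (1/3) \<le> (2 - 2 * \<beta>) * Ad x" by (rule mult_mono[OF b2 ad]) (use b2 in auto)
      then have "A x powr (1 - 2 * \<beta>) * (1/3) \<le> A x powr (1 - 2 * \<beta>) * ((2 - 2 * \<beta>) * Ad x)"
        using P1 by (intro mult_left_mono) auto
      then have "(3 * c1) * (A x powr (1 - 2 * \<beta>) * (1/3)) \<le> (3 * c1) * (A x powr (1 - 2 * \<beta>) * ((2 - 2 * \<beta>) * Ad x))"
        by (rule mult_left_mono) (use c1 in auto)
      then show ?thesis unfolding Kc_def by (simp add: algebra_simps)
    qed
    finally show ?thesis unfolding e by simp
  qed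
  define Cc where "Cc = \<bar>W T1\<bar> + Kc"
  show ?thesis
  proof (intro exI[of _ Cc] conjI allI impI)
    show "Cc > 0" unfolding Cc_def Kc_def using c1 by simp
    fix t assume t: "T1 \<le> t"
    note p = pts[OF t] Abig[OF t] Ap[OF t]
    have "W t \<le> W T1" by (rule mono_dec[OF Wd Wn order_refl t])
    then have "(A t)\<^sup>2 * xx t \<le> W T1 + Kc * A t powr (2 - 2 * \<beta>)" unfolding W_def by simp
    also have "\<dots> \<le> \<bar>W T1\<bar> * A t powr (2 - 2 * \<beta>) + Kc * A t powr (2 - 2 * \<beta>)"
    proof -
      have "1 \<le> A t powr (2 - 2 * \<beta>)" using p beta by simp
      then have "W T1 \<le> \<bar>W T1\<bar> * A t powr (2 - 2 * \<beta>)"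
        by (smt (verit, ccfv_SIG) mult_cancel_left1 mult_left_mono abs_ge_zero)
      then show ?thesis by simp
    qed
    also have "\<dots> = Cc * A t powr (2 - 2 * \<beta>)" unfolding Cc_def by (simp add: algebra_simps)
    also have "\<dots> = Cc * ((A t)\<^sup>2 * A t powr (- 2 * \<beta>))"
      using Ap(2)[OF t, of 2 "- 2 * \<beta>"] Ap(6)[OF t] by simp
    finally have "(A t)\<^sup>2 * xx t \<le> (A t)\<^sup>2 * (Cc * A t powr (- 2 * \<beta>))" by (simp add: algebra_simps)
    moreover have "(A t)\<^sup>2 > 0" using Abig(2)[OF t] by simp
    ultimately show "xx t \<le> Cc * A t powr (- 2 * \<beta>)" using mult_le_cancel_left_pos by blast
  qed
qed


lemma dinvA: assumes "T1 \<le> t" shows "((\<lambda>t. K / A t) has_real_derivative - K * Ad t / (A t)\<^sup>2) (at t)"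
  using dA[OF assms] Abig[OF assms] by (auto intro!: derivative_eq_intros simp: power2_eq_square)

lemma dinvA2: assumes "T1 \<le> t" shows "((\<lambda>t. K / (A t)\<^sup>2) has_real_derivative - 2 * K * Ad t / (A t)^3) (at t)"
  using dA[OF assms] Abig[OF assms] by (auto intro!: derivative_eq_intros simp: power2_eq_square power3_eq_cube field_simps)

lemma dh: assumes "T1 \<le> t" shows "((\<lambda>t. ln (\<psi> t) + 2 * ln (A t)) has_real_derivative (2 * xx t + ep t) / A t) (at t)"
proof -
  have "((\<lambda>t. ln (\<psi> t) + 2 * ln (A t)) has_real_derivative 2 * (\<phi> t - 1) / A t + 2 * (Ad t / A t)) (at t)"
    by (rule DERIV_add[OF dlnpsi[OF assms] DERIV_cmult[OF dlnA[OF assms]]])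
  moreover have "2 * (\<phi> t - 1) / A t + 2 * (Ad t / A t) = (2 * xx t + ep t) / A t"
    using Abig(2)[OF assms] unfolding xx_def Ad_def by (simp add: field_simps)
  ultimately show ?thesis by simp
qed

lemma ep_over_A: assumes "T1 \<le> t" shows "ep t / A t \<le> 1 / 81 * (1 / (A t)^4)"
proof -
  note p = pts[OF assms] Abig[OF assms]
  have "ep t / A t \<le> (1 / (81 * A t ^ 3)) / A t" using p by (intro divide_right_mono) auto
  also have "\<dots> = 1 / 81 * (1 / (A t)^4)" by (simp add: field_simps power_Suc[symmetric] del: power_Suc)
  finally show ?thesis .
qed

lemma psiA2_bound: "\<exists>C>0. \<forall>t\<ge>T1. \<psi> t * (A t)\<^sup>2 \<le> C"
proof -
  obtain Cc where Cc: "Cc > 0" "\<And>t. T1 \<le> t \<Longrightarrow> xx t \<le> Cc * A t powr (- 2 * \<beta>)" using x_decay by blast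
  define cd where "cd = 2 * Cc + 1/81"
  define Kd where "Kd = 3 * cd / (2 * \<beta>)"
  define W where "W t = (ln (\<psi> t) + 2 * ln (A t)) + Kd * A t powr (- 2 * \<beta>)" for t
  have Wd: "(W has_real_derivative (2 * xx x + ep x) / A x + Kd * ((- 2 * \<beta>) * A x powr (- 2 * \<beta> - 1) * Ad x)) (at x)"
    if "T1 \<le> x" for x
    unfolding W_def[abs_def] by (rule DERIV_add[OF dh[OF that] DERIV_cmult[OF dP[OF that]]])
  have Wn: "(2 * xx x + ep x) / A x + Kd * ((- 2 * \<beta>) * A x powr (- 2 * \<beta> - 1) * Ad x) \<le> 0" if "T1 \<le> x" for x
  proof -
    note p = pts[OF that] Abig[OF that]
    have Pm: "A x powr (- 2 * \<beta> - 1) = A x powr (- 2 * \<beta>) / A x"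
      using Ap(2)[OF that, of "- 2 * \<beta>" "-1"] Ap(7)[OF that, of 1] Ap(1)[OF that] by simp
    have "1 / (A x)^4 = A x powr (-4)" using Ap(7)[OF that, of 4] p by simp
    also have "\<dots> \<le> A x powr (- 2 * \<beta> - 1)" using beta by (intro Ap(5)[OF that]) auto
    finally have e4: "1 / (A x)^4 \<le> A x powr (- 2 * \<beta>) / A x" using Pm by simp
    have "(2 * xx x + ep x) / A x = 2 * (xx x / A x) + ep x / A x" by (simp add: add_divide_distrib)
    also have "\<dots> \<le> 2 * (Cc * A x powr (- 2 * \<beta>) / A x) + 1/81 * (A x powr (- 2 * \<beta>) / A x)"
    proof (rule add_mono)
      show "2 * (xx x / A x) \<le> 2 * (Cc * A x powr (- 2 * \<beta>) / A x)"
        using Cc(2)[OF that] p by (intro mult_left_mono divide_right_mono) auto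
      show "ep x / A x \<le> 1/81 * (A x powr (- 2 * \<beta>) / A x)"
        by (rule order_trans[OF ep_over_A[OF that] mult_left_mono[OF e4]]) simp
    qed
    also have "\<dots> = cd * (A x powr (- 2 * \<beta>) / A x)" unfolding cd_def by (simp add: algebra_simps)
    finally have up: "(2 * xx x + ep x) / A x \<le> cd * (A x powr (- 2 * \<beta>) / A x)" .
    have "Kd * ((2 * \<beta>) * A x powr (- 2 * \<beta> - 1) * Ad x) \<ge> Kd * ((2 * \<beta>) * A x powr (- 2 * \<beta> - 1) * (1/3))"
    proof -
      have Kd0: "Kd \<ge> 0" unfolding Kd_def cd_def using beta Cc by (intro divide_nonneg_pos) auto
      have "(2 * \<beta>) * A x powr (- 2 * \<beta> - 1) * (1/3) \<le> (2 * \<beta>) * A x powr (- 2 * \<beta> - 1) * Ad x"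
        using p beta Ap(3)[OF that, of "- 2 * \<beta> - 1"] by (intro mult_left_mono) auto
      then show ?thesis using Kd0 by (rule mult_left_mono)
    qed
    also have "Kd * ((2 * \<beta>) * A x powr (- 2 * \<beta> - 1) * (1/3)) = cd * (A x powr (- 2 * \<beta>) / A x)"
      unfolding Kd_def Pm using beta by (simp add: field_simps)
    finally show ?thesis using up by simp
  qed
  show ?thesis
  proof (intro exI[of _ "exp (W T1)"] conjI allI impI)
    show "exp (W T1) > 0" by simp
    fix t assume t: "T1 \<le> t"
    note p = pts[OF t] Abig[OF t]
    have "W t \<le> W T1" by (rule mono_dec[OF Wd Wn order_refl t])
    moreover have "Kd * A t powr (- 2 * \<beta>) \<ge> 0" unfolding Kd_def cd_def using beta Ap(3)[OF t] Cc by simp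
    ultimately have "ln (\<psi> t) + 2 * ln (A t) \<le> W T1" unfolding W_def by simp
    moreover have "ln (\<psi> t) + 2 * ln (A t) = ln (\<psi> t * (A t)\<^sup>2)" using p by (simp add: ln_mult ln_realpow)
    ultimately have "ln (\<psi> t * (A t)\<^sup>2) \<le> W T1" by simp
    then have "exp (ln (\<psi> t * (A t)\<^sup>2)) \<le> exp (W T1)" by simp
    then show "\<psi> t * (A t)\<^sup>2 \<le> exp (W T1)" using p by simp
  qed
qed

lemma xA2_bound: "\<exists>C>0. \<forall>t\<ge>T1. (A t)\<^sup>2 * xx t \<le> C"
proof -
  obtain Cd where Cd: "Cd > 0" "\<And>t. T1 \<le> t \<Longrightarrow> \<psi> t * (A t)\<^sup>2 \<le> Cd" using psiA2_bound by blast
  define Ke where "Ke = 2/27 + Cd\<^sup>2"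
  define W where "W t = (A t)\<^sup>2 * xx t + Ke / A t" for t
  have Wd: "(W has_real_derivative Dphi x + - Ke * Ad x / (A x)\<^sup>2) (at x)" if "T1 \<le> x" for x
    unfolding W_def[abs_def] by (rule DERIV_add[OF dPhi[OF that] dinvA[OF that]])
  have Wn: "Dphi x + - Ke * Ad x / (A x)\<^sup>2 \<le> 0" if "T1 \<le> x" for x
  proof -
    note p = pts[OF that] Abig[OF that]
    have "A x * (\<psi> x)\<^sup>2 = (\<psi> x * (A x)\<^sup>2)\<^sup>2 / (A x)^3" using p by (simp add: field_simps power2_eq_square power3_eq_cube)
    also have "\<dots> \<le> Cd\<^sup>2 / (A x)^3" using Cd(2)[OF that] p by (intro divide_right_mono power_mono) auto
    also have "\<dots> \<le> Cd\<^sup>2 / (A x)\<^sup>2"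
    proof -
      have "(A x)\<^sup>2 \<le> (A x)^3" using p by (simp add: power2_eq_square power3_eq_cube)
      then show ?thesis using p by (intro divide_left_mono) auto
    qed
    finally have "A x * (\<psi> x)\<^sup>2 / 3 \<le> Cd\<^sup>2 / (A x)\<^sup>2 / 3" by simp
    moreover have "Ke * (1/3) / (A x)\<^sup>2 \<le> Ke * Ad x / (A x)\<^sup>2"
      using p unfolding Ke_def by (intro divide_right_mono mult_left_mono) auto
    moreover have "2 / (81 * (A x)\<^sup>2) + Cd\<^sup>2 / (A x)\<^sup>2 / 3 = Ke * (1/3) / (A x)\<^sup>2"
      using p unfolding Ke_def by (simp add: field_simps)
    ultimately show ?thesis using Dphi_up[OF that] by simp
  qed
  show ?thesis
  proof (intro exI[of _ "W T1"] conjI allI impI)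
    have "W T1 \<ge> (A T1)\<^sup>2 * xx T1" unfolding W_def Ke_def using Abig(2)[of T1] by simp
    moreover have "(A T1)\<^sup>2 * xx T1 > 0" using pts(8)[of T1] Abig(2)[of T1] by simp
    ultimately show "W T1 > 0" by simp
    fix t assume t: "T1 \<le> t"
    have "W t \<le> W T1" by (rule mono_dec[OF Wd Wn order_refl t])
    moreover have "Ke / A t \<ge> 0" unfolding Ke_def using Abig(2)[OF t] by simp
    ultimately show "(A t)\<^sup>2 * xx t \<le> W T1" unfolding W_def by simp
  qed
qed


lemma inv_pow_le: assumes "T1 \<le> t" "m \<le> n" shows "1 / (A t) ^ n \<le> 1 / (A t) ^ m"
proof -
  have "(A t) ^ m \<le> (A t) ^ n" using Abig[OF assms(1)] assms(2) by (intro power_increasing) auto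
  then show ?thesis using Abig[OF assms(1)] by (intro divide_left_mono) auto
qed

lemma lam_lim: "\<exists>L K. K \<ge> 0 \<and> (\<forall>t\<ge>T1. ln (\<psi> t) + 2 * ln (A t) \<le> L \<and> L \<le> ln (\<psi> t) + 2 * ln (A t) + K / (A t)\<^sup>2)"
proof -
  obtain Ce where Ce: "Ce > 0" "\<And>t. T1 \<le> t \<Longrightarrow> (A t)\<^sup>2 * xx t \<le> Ce" using xA2_bound by blast
  define cf where "cf = 2 * Ce + 1/81"
  define Kf where "Kf = 3 * cf / 2"
  have Kf0: "Kf \<ge> 0" unfolding Kf_def cf_def using Ce by simp
  define h where "h t = ln (\<psi> t) + 2 * ln (A t)" for t
  define g where "g t = h t + Kf / (A t)\<^sup>2" for t
  have hd: "(h has_real_derivative (2 * xx x + ep x) / A x) (at x)" if "T1 \<le> x" for x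
    unfolding h_def[abs_def] using dh[OF that] .
  have hn: "(2 * xx x + ep x) / A x \<ge> 0" if "T1 \<le> x" for x using pts[OF that] Abig[OF that] by simp
  have gd: "(g has_real_derivative (2 * xx x + ep x) / A x + - 2 * Kf * Ad x / (A x)^3) (at x)" if "T1 \<le> x" for x
    unfolding g_def[abs_def] by (rule DERIV_add[OF hd[OF that] dinvA2[OF that]])
  have gn: "(2 * xx x + ep x) / A x + - 2 * Kf * Ad x / (A x)^3 \<le> 0" if "T1 \<le> x" for x
  proof -
    note p = pts[OF that] Abig[OF that]
    have "xx x / A x = ((A x)\<^sup>2 * xx x) / (A x)^3" using p by (simp add: field_simps power2_eq_square power3_eq_cube)
    also have "\<dots> \<le> Ce / (A x)^3" using Ce(2)[OF that] p by (intro divide_right_mono) auto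
    finally have a1: "xx x / A x \<le> Ce / (A x)^3" .
    have a2: "ep x / A x \<le> 1/81 * (1 / (A x)^3)"
      using ep_over_A[OF that] inv_pow_le[OF that, of 3 4] by simp
    have "(2 * xx x + ep x) / A x = 2 * (xx x / A x) + ep x / A x" by (simp add: add_divide_distrib)
    also have "\<dots> \<le> 2 * (Ce / (A x)^3) + 1/81 * (1 / (A x)^3)" using a1 a2 by (intro add_mono) auto
    also have "\<dots> = cf / (A x)^3" unfolding cf_def by (simp add: add_divide_distrib)
    also have "\<dots> \<le> 2 * Kf * Ad x / (A x)^3"
    proof -
      have "cf = 2 * Kf * (1/3)" unfolding Kf_def by simp
      also have "\<dots> \<le> 2 * Kf * Ad x" using p Kf0 by (intro mult_left_mono) auto
      finally show ?thesis using p by (intro divide_right_mono) auto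
    qed
    finally show ?thesis by simp
  qed
  have hmono: "h s \<le> h t" if "T1 \<le> s" "s \<le> t" for s t by (rule mono_inc[OF hd hn that])
  have gmono: "g t \<le> g s" if "T1 \<le> s" "s \<le> t" for s t by (rule mono_dec[OF gd gn that])
  have hg: "h t \<le> g t" if "T1 \<le> t" for t unfolding g_def using Kf0 by simp
  have "\<exists>L. \<forall>t\<ge>T1. h t \<le> L \<and> L \<le> g t"
    by (rule sup_sandwich[of T1 h g]) (use hmono gmono hg in auto)
  then obtain L where L: "\<forall>t\<ge>T1. h t \<le> L \<and> L \<le> g t" by blast
  show ?thesis using L Kf0 unfolding h_def g_def by blast
qed

lemma Dphi_abs: "\<exists>c>0. \<forall>t\<ge>T1. \<bar>Dphi t\<bar> \<le> c / (A t)\<^sup>2"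
proof -
  obtain Ce where Ce: "Ce > 0" "\<And>t. T1 \<le> t \<Longrightarrow> (A t)\<^sup>2 * xx t \<le> Ce" using xA2_bound by blast
  obtain Cd where Cd: "Cd > 0" "\<And>t. T1 \<le> t \<Longrightarrow> \<psi> t * (A t)\<^sup>2 \<le> Cd" using psiA2_bound by blast
  define c where "c = 2/81 + Ce\<^sup>2 + Cd\<^sup>2 / 3"
  show ?thesis
  proof (intro exI[of _ c] conjI allI impI)
    show "c > 0" unfolding c_def using Ce by (intro add_pos_nonneg) auto
    fix t assume t: "T1 \<le> t"
    note p = pts[OF t] Abig[OF t]
    have i32: "1 / (A t)^3 \<le> 1 / (A t)\<^sup>2" using inv_pow_le[OF t, of 2 3] by simp
    have "A t * (\<psi> t)\<^sup>2 = (\<psi> t * (A t)\<^sup>2)\<^sup>2 * (1 / (A t)^3)" using p by (simp add: field_simps power2_eq_square power3_eq_cube)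
    also have "\<dots> \<le> Cd\<^sup>2 * (1 / (A t)\<^sup>2)" using Cd(2)[OF t] p i32 by (intro mult_mono power_mono) auto
    finally have b1: "A t * (\<psi> t)\<^sup>2 \<le> Cd\<^sup>2 * (1 / (A t)\<^sup>2)" .
    have "A t * (xx t)\<^sup>2 = ((A t)\<^sup>2 * xx t)\<^sup>2 * (1 / (A t)^3)" using p by (simp add: field_simps power2_eq_square power3_eq_cube)
    also have "\<dots> \<le> Ce\<^sup>2 * (1 / (A t)\<^sup>2)" using Ce(2)[OF t] p i32 by (intro mult_mono power_mono) auto
    finally have b2: "A t * (xx t)\<^sup>2 \<le> Ce\<^sup>2 * (1 / (A t)\<^sup>2)" .
    have up: "Dphi t \<le> c / (A t)\<^sup>2"
    proof -
      have "Dphi t \<le> 2 / (81 * (A t)\<^sup>2) + A t * (\<psi> t)\<^sup>2 / 3" by (rule Dphi_up[OF t])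
      also have "\<dots> \<le> 2 / (81 * (A t)\<^sup>2) + Cd\<^sup>2 * (1 / (A t)\<^sup>2) / 3" using b1 by simp
      also have "\<dots> \<le> c / (A t)\<^sup>2" unfolding c_def using p by (simp add: field_simps)
      finally show ?thesis .
    qed
    have lo: "Dphi t \<ge> - (A t * (xx t)\<^sup>2)"
    proof -
      have "ep t * (xx t + \<phi> t) - (xx t)\<^sup>2 + (\<psi> t)\<^sup>2 * (1/3 - ep t) \<ge> - (xx t)\<^sup>2"
        using p by (simp add: add_nonneg_nonneg)
      then show ?thesis unfolding Dphi_def using p by (smt (verit) mult_left_mono mult_minus_right)
    qed
    have "- (c / (A t)\<^sup>2) \<le> - (A t * (xx t)\<^sup>2)"
    proof -
      have "Ce\<^sup>2 * (1 / (A t)\<^sup>2) \<le> c * (1 / (A t)\<^sup>2)" unfolding c_def using p by (intro mult_right_mono) auto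
      then have "A t * (xx t)\<^sup>2 \<le> c / (A t)\<^sup>2" using b2 by simp
      then show ?thesis by simp
    qed
    with up lo show "\<bar>Dphi t\<bar> \<le> c / (A t)\<^sup>2" by (simp add: abs_le_iff)
  qed
qed


lemma Dphi_lo: assumes "T1 \<le> t" shows "Dphi t \<ge> - (A t * (xx t)\<^sup>2)"
proof -
  note p = pts[OF assms] Abig[OF assms]
  have "ep t * (xx t + \<phi> t) - (xx t)\<^sup>2 + (\<psi> t)\<^sup>2 * (1/3 - ep t) \<ge> - (xx t)\<^sup>2"
    using p by (simp add: add_nonneg_nonneg)
  then have "A t * (ep t * (xx t + \<phi> t) - (xx t)\<^sup>2 + (\<psi> t)\<^sup>2 * (1/3 - ep t)) \<ge> A t * (- (xx t)\<^sup>2)"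
    using p by (intro mult_left_mono) auto
  then show ?thesis unfolding Dphi_def by simp
qed

lemma M_lim: "\<exists>M K. M > 0 \<and> K \<ge> 0 \<and> (\<forall>t\<ge>T1. \<bar>(A t)\<^sup>2 * xx t - M\<bar> \<le> K / A t)"
proof -
  obtain cg where cg: "cg > 0" "\<And>t. T1 \<le> t \<Longrightarrow> \<bar>Dphi t\<bar> \<le> cg / (A t)\<^sup>2" using Dphi_abs by blast
  obtain Ce where Ce: "Ce > 0" "\<And>t. T1 \<le> t \<Longrightarrow> (A t)\<^sup>2 * xx t \<le> Ce" using xA2_bound by blast
  define \<Phi> where "\<Phi> t = (A t)\<^sup>2 * xx t" for t
  define h where "h t = \<Phi> t - 3 * cg / A t" for t
  define g where "g t = \<Phi> t + 3 * cg / A t" for t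
  have key: "cg / (A x)\<^sup>2 \<le> 3 * cg * Ad x / (A x)\<^sup>2" if "T1 \<le> x" for x
  proof -
    have "cg * 1 \<le> cg * (3 * Ad x)" using pts[OF that] cg by (intro mult_left_mono) auto
    then show ?thesis using Abig[OF that] by (intro divide_right_mono) auto
  qed
  have hd: "(h has_real_derivative Dphi x - - (3 * cg) * Ad x / (A x)\<^sup>2) (at x)" if "T1 \<le> x" for x
    unfolding h_def[abs_def] \<Phi>_def by (rule DERIV_diff[OF dPhi[OF that] dinvA[OF that]])
  have hn: "Dphi x - - (3 * cg) * Ad x / (A x)\<^sup>2 \<ge> 0" if "T1 \<le> x" for x
    using cg(2)[OF that] key[OF that] by (simp add: abs_le_iff)
  have gd: "(g has_real_derivative Dphi x + - (3 * cg) * Ad x / (A x)\<^sup>2) (at x)" if "T1 \<le> x" for x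
    unfolding g_def[abs_def] \<Phi>_def by (rule DERIV_add[OF dPhi[OF that] dinvA[OF that]])
  have gn: "Dphi x + - (3 * cg) * Ad x / (A x)\<^sup>2 \<le> 0" if "T1 \<le> x" for x
    using cg(2)[OF that] key[OF that] by (simp add: abs_le_iff)
  have hmono: "h s \<le> h t" if "T1 \<le> s" "s \<le> t" for s t by (rule mono_inc[OF hd hn that])
  have gmono: "g t \<le> g s" if "T1 \<le> s" "s \<le> t" for s t by (rule mono_dec[OF gd gn that])
  have hg: "h t \<le> g t" if "T1 \<le> t" for t unfolding h_def g_def using cg Abig(2)[OF that] by simp
  have "\<exists>L. \<forall>t\<ge>T1. h t \<le> L \<and> L \<le> g t"
    by (rule sup_sandwich[of T1 h g]) (use hmono gmono hg in auto)
  then obtain L where L: "\<And>t. T1 \<le> t \<Longrightarrow> h t \<le> L \<and> L \<le> g t" by blast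
  define Kl where "Kl = 3 * Ce / 2"
  define W where "W t = ln (\<Phi> t) - Kl / (A t)\<^sup>2" for t
  have Phipos: "\<Phi> t > 0" if "T1 \<le> t" for t unfolding \<Phi>_def using pts[OF that] Abig[OF that] by simp
  have Wd: "(W has_real_derivative Dphi x / \<Phi> x - - 2 * Kl * Ad x / (A x)^3) (at x)" if "T1 \<le> x" for x
  proof -
    have dP': "(\<Phi> has_real_derivative Dphi x) (at x)" unfolding \<Phi>_def[abs_def] by (rule dPhi[OF that])
    have "((\<lambda>t. ln (\<Phi> t)) has_real_derivative 1 / \<Phi> x * Dphi x) (at x)"
      using DERIV_chain2[OF DERIV_ln_divide[OF Phipos[OF that]] dP'] by simp
    then show ?thesis unfolding W_def[abs_def] by (intro DERIV_diff dinvA2[OF that]) simp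
  qed
  have Wn: "Dphi x / \<Phi> x - - 2 * Kl * Ad x / (A x)^3 \<ge> 0" if "T1 \<le> x" for x
  proof -
    note p = pts[OF that] Abig[OF that]
    have "Dphi x / \<Phi> x \<ge> - (A x * (xx x)\<^sup>2) / \<Phi> x" using Dphi_lo[OF that] Phipos[OF that] by (intro divide_right_mono) auto
    moreover have "- (A x * (xx x)\<^sup>2) / \<Phi> x = - (\<Phi> x / (A x)^3)"
      unfolding \<Phi>_def using p by (simp add: field_simps power2_eq_square power3_eq_cube)
    moreover have "\<Phi> x / (A x)^3 \<le> Ce / (A x)^3" unfolding \<Phi>_def using Ce(2)[OF that] p by (intro divide_right_mono) auto
    moreover have "Ce / (A x)^3 \<le> 2 * Kl * Ad x / (A x)^3"
    proof -
      have "Ce = 2 * Kl * (1/3)" unfolding Kl_def by simp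
      also have "\<dots> \<le> 2 * Kl * Ad x" using p Ce unfolding Kl_def by (intro mult_left_mono) auto
      finally show ?thesis using p by (intro divide_right_mono) auto
    qed
    ultimately show ?thesis by simp
  qed
  define c\<Phi> where "c\<Phi> = exp (ln (\<Phi> T1) - Kl)"
  have cpos: "c\<Phi> > 0" unfolding c\<Phi>_def by simp
  have Phi_low: "\<Phi> t \<ge> c\<Phi>" if "T1 \<le> t" for t
  proof -
    have "W T1 \<le> W t" by (rule mono_inc[OF Wd Wn order_refl that])
    moreover have "Kl / (A T1)\<^sup>2 \<le> Kl" using Abig[of T1] Ce unfolding Kl_def
      by (simp add: field_simps one_le_power)
    moreover have "Kl / (A t)\<^sup>2 \<ge> 0" unfolding Kl_def using Ce by simp
    ultimately have "ln (\<Phi> T1) - Kl \<le> ln (\<Phi> t)" unfolding W_def by simp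
    then have "exp (ln (\<Phi> T1) - Kl) \<le> exp (ln (\<Phi> t))" by simp
    then show ?thesis unfolding c\<Phi>_def using Phipos[OF that] by simp
  qed
  define ts where "ts = T1 + 18 * cg / c\<Phi>"
  have ts: "T1 \<le> ts" unfolding ts_def using cg cpos by simp
  have "A ts \<ge> 6 * cg / c\<Phi>"
  proof -
    have "A ts \<ge> A T1 + (ts - T1) / 3" by (rule Abig(3)[OF ts])
    moreover have "(ts - T1) / 3 = 6 * cg / c\<Phi>" unfolding ts_def by simp
    ultimately show ?thesis using Abig(2)[of T1] by simp
  qed
  then have "3 * cg / A ts \<le> c\<Phi> / 2" using cg cpos Abig(2)[OF ts] by (simp add: field_simps)
  moreover have "L \<ge> \<Phi> ts - 3 * cg / A ts" using L[OF ts] unfolding h_def by simp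
  ultimately have Lpos: "L > 0" using Phi_low[OF ts] cpos by simp
  have bnd: "\<forall>t\<ge>T1. \<bar>(A t)\<^sup>2 * xx t - L\<bar> \<le> 3 * cg / A t"
  proof (intro allI impI)
    fix t assume t: "T1 \<le> t"
    from L[OF t] show "\<bar>(A t)\<^sup>2 * xx t - L\<bar> \<le> 3 * cg / A t" unfolding h_def g_def \<Phi>_def by (simp add: abs_le_iff)
  qed
  have "3 * cg \<ge> 0" using cg by simp
  with Lpos bnd show ?thesis by blast
qed

lemma a_lim: "\<exists>a. \<forall>t\<ge>T1. \<bar>A t - t / 3 - a\<bar> \<le> 1 / (108 * (A t)\<^sup>2)"
proof -
  define h where "h t = A t - t / 3" for t
  define g where "g t = h t + (1/108) / (A t)\<^sup>2" for t
  have hd: "(h has_real_derivative Ad x - 1/3) (at x)" if "T1 \<le> x" for x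
    unfolding h_def[abs_def] by (rule DERIV_diff[OF dA[OF that]]) (rule DERIV_cdivide[OF DERIV_ident, of 3, simplified])
  have hn: "Ad x - 1/3 \<ge> 0" if "T1 \<le> x" for x using pts[OF that] by simp
  have gd: "(g has_real_derivative (Ad x - 1/3) + - 2 * (1/108) * Ad x / (A x)^3) (at x)" if "T1 \<le> x" for x
    unfolding g_def[abs_def] by (rule DERIV_add[OF hd[OF that] dinvA2[OF that]])
  have gn: "(Ad x - 1/3) + - 2 * (1/108) * Ad x / (A x)^3 \<le> 0" if "T1 \<le> x" for x
  proof -
    note p = pts[OF that] Abig[OF that]
    have "Ad x - 1/3 = ep x / 2" unfolding Ad_def by simp
    also have "\<dots> \<le> (1 / (81 * A x ^ 3)) / 2" using p by simp
    also have "\<dots> = 2 * (1/108) * (1/3) / (A x)^3" by simp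
    also have "\<dots> \<le> 2 * (1/108) * Ad x / (A x)^3" using p by (intro divide_right_mono mult_left_mono) auto
    finally show ?thesis by simp
  qed
  have hmono: "h s \<le> h t" if "T1 \<le> s" "s \<le> t" for s t by (rule mono_inc[OF hd hn that])
  have gmono: "g t \<le> g s" if "T1 \<le> s" "s \<le> t" for s t by (rule mono_dec[OF gd gn that])
  have hg: "h t \<le> g t" if "T1 \<le> t" for t unfolding g_def by simp
  have "\<exists>L. \<forall>t\<ge>T1. h t \<le> L \<and> L \<le> g t"
    by (rule sup_sandwich[of T1 h g]) (use hmono gmono hg in auto)
  then obtain L where L: "\<And>t. T1 \<le> t \<Longrightarrow> h t \<le> L \<and> L \<le> g t" by blast
  show ?thesis
  proof (intro exI[of _ L] allI impI)
    fix t assume t: "T1 \<le> t"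
    from L[OF t] show "\<bar>A t - t / 3 - L\<bar> \<le> 1 / (108 * (A t)\<^sup>2)" unfolding h_def g_def by (simp add: abs_le_iff)
  qed
qed


lemma final_asymp:
  "(\<phi> \<longlongrightarrow> 2/3) at_top \<and> (\<psi> \<longlongrightarrow> 0) at_top \<and>
   (\<exists>\<mu> \<nu> :: real. \<mu> \<noteq> 0 \<and> \<nu> \<noteq> 0 \<and>
      (\<lambda>t. \<phi> t - 2/3 - \<mu> / t\<^sup>2) \<in> O[at_top](\<lambda>t. 1 / t ^ 3) \<and>
      (\<lambda>t. \<psi> t - \<nu> / t\<^sup>2) \<in> O[at_top](\<lambda>t. 1 / t ^ 3))"
proof -
  obtain M KM where M: "M > 0" "KM \<ge> 0" "\<And>t. T1 \<le> t \<Longrightarrow> \<bar>(A t)\<^sup>2 * xx t - M\<bar> \<le> KM / A t"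
    using M_lim by blast
  obtain L KL where L: "KL \<ge> 0" "\<And>t. T1 \<le> t \<Longrightarrow> ln (\<psi> t) + 2 * ln (A t) \<le> L \<and> L \<le> ln (\<psi> t) + 2 * ln (A t) + KL / (A t)\<^sup>2"
    using lam_lim by blast
  obtain a where a: "\<And>t. T1 \<le> t \<Longrightarrow> \<bar>A t - t / 3 - a\<bar> \<le> 1 / (108 * (A t)\<^sup>2)" using a_lim by blast
  obtain Ce where Ce: "Ce > 0" "\<And>t. T1 \<le> t \<Longrightarrow> (A t)\<^sup>2 * xx t \<le> Ce" using xA2_bound by blast
  obtain Cd where Cd: "Cd > 0" "\<And>t. T1 \<le> t \<Longrightarrow> \<psi> t * (A t)\<^sup>2 \<le> Cd" using psiA2_bound by blast
  define D where "D = 3 * \<bar>a\<bar> + 1"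
  have D0: "D \<ge> 1" unfolding D_def by simp
  define T3 where "T3 = max T1 (2 * D)"
  have T3: "T3 \<ge> T1" "T3 > 0" "T3 \<ge> 2 * D" unfolding T3_def using T1 D0 by auto
  have At: "t / 6 \<le> A t" "A t > 0" "A t \<ge> 1" "\<bar>t - 3 * A t\<bar> \<le> D" "\<bar>t + 3 * A t\<bar> \<le> 3 * t" "t > 0"
    if "T3 \<le> t" for t
  proof -
    have t1: "T1 \<le> t" using T3 that by simp
    have A1: "A t \<ge> 1" "A t > 0" using Abig[OF t1] by auto
    have "1 / (108 * (A t)\<^sup>2) \<le> 1 / 108" using A1 by (simp add: field_simps one_le_power)
    then have "\<bar>A t - t / 3 - a\<bar> \<le> 1 / 108" using a[OF t1] by simp
    moreover have "3 * A t - t - 3 * a = 3 * (A t - t / 3 - a)" by simp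
    ultimately have "\<bar>3 * A t - t - 3 * a\<bar> \<le> 1 / 36" by (simp only: abs_mult)
    moreover have "\<bar>t - 3 * A t\<bar> \<le> \<bar>3 * A t - t - 3 * a\<bar> + \<bar>3 * a\<bar>"
      using abs_triangle_ineq[of "-(3 * A t - t - 3 * a)" "- (3 * a)"] by simp
    moreover have "\<bar>3 * a\<bar> = 3 * \<bar>a\<bar>" by (simp add: abs_mult)
    ultimately show D: "\<bar>t - 3 * A t\<bar> \<le> D" unfolding D_def by linarith
    show "t > 0" using T3 that by simp
    show "t / 6 \<le> A t" using D T3 that by (simp add: abs_le_iff; linarith)
    show "A t > 0" "A t \<ge> 1" by (fact A1)+
    show "\<bar>t + 3 * A t\<bar> \<le> 3 * t" using D T3 that A1 by (simp add: abs_le_iff)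
  qed
  have inv: "1 / (A t) ^ n \<le> 6 ^ n / t ^ n" if "T3 \<le> t" for t n
  proof -
    note p = At[OF that]
    have "(t / 6) ^ n \<le> (A t) ^ n" using p by (intro power_mono) auto
    then have "1 / (A t) ^ n \<le> 1 / (t / 6) ^ n" using p by (intro divide_left_mono) (auto intro!: mult_pos_pos)
    then show ?thesis by (simp add: power_divide)
  qed
  have ratio: "\<bar>1 / (A t)\<^sup>2 - 9 / t\<^sup>2\<bar> \<le> 108 * D / t ^ 3" if "T3 \<le> t" for t
  proof -
    note p = At[OF that]
    have "1 / (A t)\<^sup>2 - 9 / t\<^sup>2 = ((t - 3 * A t) * (t + 3 * A t)) * (1 / (A t)\<^sup>2) * (1 / t\<^sup>2)"
      using p by (simp add: field_simps power2_eq_square)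
    then have "\<bar>1 / (A t)\<^sup>2 - 9 / t\<^sup>2\<bar> = (\<bar>t - 3 * A t\<bar> * \<bar>t + 3 * A t\<bar>) * (1 / (A t)\<^sup>2) * (1 / t\<^sup>2)"
      using p by (simp add: abs_mult)
    also have "\<dots> \<le> (D * (3 * t)) * (6\<^sup>2 / t\<^sup>2) * (1 / t\<^sup>2)"
      using p inv[OF that, of 2] by (intro mult_mono) auto
    also have "\<dots> = 108 * D / t ^ 3" using p by (simp add: field_simps power2_eq_square power3_eq_cube)
    finally show ?thesis .
  qed
  have fp_bound: "\<bar>\<phi> t - 2/3 - 9 * M / t\<^sup>2\<bar> \<le> (216 * KM + 108 * D * M) / t ^ 3" if "T3 \<le> t" for t
  proof -
    have Ap: "A t > 0" and tp: "t > 0" using At[OF that] by auto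
    have t1: "T1 \<le> t" using T3 that by simp
    define X where "X = (A t)\<^sup>2 * xx t - M"
    define Y where "Y = 1 / (A t)\<^sup>2 - 9 / t\<^sup>2"
    have xa: "(A t)\<^sup>2 * xx t * (1 / (A t)\<^sup>2) = xx t" using Ap by simp
    have "X * (1 / (A t)\<^sup>2) + M * Y = (A t)\<^sup>2 * xx t * (1 / (A t)\<^sup>2) - 9 * M / t\<^sup>2"
      unfolding X_def Y_def by (simp add: algebra_simps)
    then have E: "\<phi> t - 2/3 - 9 * M / t\<^sup>2 = X * (1 / (A t)\<^sup>2) + M * Y" using xa xx_def[of t] by linarith
    have "\<bar>X * (1 / (A t)\<^sup>2) + M * Y\<bar> \<le> \<bar>X * (1 / (A t)\<^sup>2)\<bar> + \<bar>M * Y\<bar>" by (rule abs_triangle_ineq)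
    also have "\<bar>X * (1 / (A t)\<^sup>2)\<bar> = \<bar>X\<bar> * (1 / (A t)\<^sup>2)" using Ap by (simp add: abs_mult)
    also have "\<bar>M * Y\<bar> = M * \<bar>Y\<bar>" using M(1) by (simp add: abs_mult)
    also have "\<bar>X\<bar> * (1 / (A t)\<^sup>2) + M * \<bar>Y\<bar> \<le> KM * (6^3 / t^3) + M * (108 * D / t ^ 3)"
    proof (rule add_mono)
      have "\<bar>X\<bar> * (1 / (A t)\<^sup>2) \<le> (KM / A t) * (1 / (A t)\<^sup>2)"
        using M(3)[OF t1] unfolding X_def by (intro mult_right_mono) auto
      also have "(KM / A t) * (1 / (A t)\<^sup>2) = KM * (1 / (A t)^3)" by (simp add: power2_eq_square power3_eq_cube)
      also have "KM * (1 / (A t)^3) \<le> KM * (6^3 / t^3)" using inv[OF that, of 3] M(2) by (intro mult_left_mono) auto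
      finally show "\<bar>X\<bar> * (1 / (A t)\<^sup>2) \<le> KM * (6^3 / t^3)" .
      show "M * \<bar>Y\<bar> \<le> M * (108 * D / t ^ 3)" using ratio[OF that] M(1) unfolding Y_def by (intro mult_left_mono) auto
    qed
    also have "KM * (6^3 / t^3) + M * (108 * D / t ^ 3) = (216 * KM + 108 * D * M) / t ^ 3" by (simp add: add_divide_distrib mult_ac)
    finally show ?thesis unfolding E .
  qed
  have fm_bound: "\<bar>\<psi> t - 9 * exp L / t\<^sup>2\<bar> \<le> (216 * exp L * KL + 108 * D * exp L) / t ^ 3" if "T3 \<le> t" for t
  proof -
    have Ap: "A t > 0" and A1: "A t \<ge> 1" and tp: "t > 0" using At[OF that] by auto
    have t1: "T1 \<le> t" using T3 that by simp
    have psp: "\<psi> t > 0" using pts(10)[OF t1] .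
    have pos: "\<psi> t * (A t)\<^sup>2 > 0" using psp Ap by simp
    have hl: "ln (\<psi> t) + 2 * ln (A t) = ln (\<psi> t * (A t)\<^sup>2)" using psp Ap by (simp add: ln_mult ln_realpow)
    have eh: "exp (ln (\<psi> t * (A t)\<^sup>2)) = \<psi> t * (A t)\<^sup>2" using pos by simp
    have Lh: "ln (\<psi> t * (A t)\<^sup>2) \<le> L" "L - ln (\<psi> t * (A t)\<^sup>2) \<le> KL / (A t)\<^sup>2" using L(2)[OF t1] unfolding hl by auto
    have le: "\<psi> t * (A t)\<^sup>2 \<le> exp L" using Lh(1) eh by (metis exp_le_cancel_iff)
    have "\<bar>\<psi> t * (A t)\<^sup>2 - exp L\<bar> = exp L - exp (ln (\<psi> t * (A t)\<^sup>2))"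
      using le eh by simp
    also have "\<dots> \<le> exp L * (L - ln (\<psi> t * (A t)\<^sup>2))" by (rule exp_diff_le[OF Lh(1)])
    also have "\<dots> \<le> exp L * (KL / (A t)\<^sup>2)" using Lh(2) by (intro mult_left_mono) auto
    also have "\<dots> \<le> exp L * (KL / A t)"
    proof -
      have "A t \<le> (A t)\<^sup>2" using A1 by (simp add: power2_eq_square)
      then have "KL / (A t)\<^sup>2 \<le> KL / A t" using Ap L(1) by (intro divide_left_mono) auto
      then show ?thesis by (intro mult_left_mono) auto
    qed
    finally have e1: "\<bar>\<psi> t * (A t)\<^sup>2 - exp L\<bar> \<le> exp L * (KL / A t)" .
    define X where "X = \<psi> t * (A t)\<^sup>2 - exp L"
    define Y where "Y = 1 / (A t)\<^sup>2 - 9 / t\<^sup>2"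
    have xa: "\<psi> t * (A t)\<^sup>2 * (1 / (A t)\<^sup>2) = \<psi> t" using Ap by simp
    have "X * (1 / (A t)\<^sup>2) + exp L * Y = \<psi> t * (A t)\<^sup>2 * (1 / (A t)\<^sup>2) - 9 * exp L / t\<^sup>2"
      unfolding X_def Y_def by (simp add: algebra_simps)
    then have E: "\<psi> t - 9 * exp L / t\<^sup>2 = X * (1 / (A t)\<^sup>2) + exp L * Y" using xa by linarith
    have "\<bar>X * (1 / (A t)\<^sup>2) + exp L * Y\<bar> \<le> \<bar>X * (1 / (A t)\<^sup>2)\<bar> + \<bar>exp L * Y\<bar>" by (rule abs_triangle_ineq)
    also have "\<bar>X * (1 / (A t)\<^sup>2)\<bar> = \<bar>X\<bar> * (1 / (A t)\<^sup>2)" using Ap by (simp add: abs_mult)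
    also have "\<bar>exp L * Y\<bar> = exp L * \<bar>Y\<bar>" by (simp add: abs_mult)
    also have "\<bar>X\<bar> * (1 / (A t)\<^sup>2) + exp L * \<bar>Y\<bar> \<le> exp L * KL * (6^3 / t^3) + exp L * (108 * D / t ^ 3)"
    proof (rule add_mono)
      have "\<bar>X\<bar> * (1 / (A t)\<^sup>2) \<le> (exp L * (KL / A t)) * (1 / (A t)\<^sup>2)"
        using e1 unfolding X_def by (intro mult_right_mono) auto
      also have "(exp L * (KL / A t)) * (1 / (A t)\<^sup>2) = exp L * KL * (1 / (A t)^3)" by (simp add: power2_eq_square power3_eq_cube)
      also have "exp L * KL * (1 / (A t)^3) \<le> exp L * KL * (6^3 / t^3)" using inv[OF that, of 3] L(1) by (intro mult_left_mono) auto
      finally show "\<bar>X\<bar> * (1 / (A t)\<^sup>2) \<le> exp L * KL * (6^3 / t^3)" .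
      show "exp L * \<bar>Y\<bar> \<le> exp L * (108 * D / t ^ 3)" using ratio[OF that] unfolding Y_def by (intro mult_left_mono) auto
    qed
    also have "exp L * KL * (6^3 / t^3) + exp L * (108 * D / t ^ 3) = (216 * exp L * KL + 108 * D * exp L) / t ^ 3"
      by (simp add: add_divide_distrib mult_ac)
    finally show ?thesis unfolding E .
  qed
  have lim1: "(\<phi> \<longlongrightarrow> 2/3) at_top"
  proof (rule lim_from[where T=T3 and C="36 * Ce"])
    fix t assume t: "T3 \<le> t"
    note p = At[OF t]
    have t1: "T1 \<le> t" using T3 t by simp
    have "\<bar>\<phi> t - 2/3\<bar> = ((A t)\<^sup>2 * xx t) * (1 / (A t)\<^sup>2)" using pts[OF t1] p unfolding xx_def by simp
    also have "\<dots> \<le> Ce * (6\<^sup>2 / t\<^sup>2)" using Ce(2)[OF t1] inv[OF t, of 2] Ce(1) pts[OF t1] p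
      by (intro mult_mono) auto
    finally show "\<bar>\<phi> t - 2/3\<bar> \<le> 36 * Ce / t\<^sup>2" by (simp add: mult_ac)
  qed
  have lim2: "(\<psi> \<longlongrightarrow> 0) at_top"
  proof (rule lim_from[where T=T3 and C="36 * Cd"])
    fix t assume t: "T3 \<le> t"
    note p = At[OF t]
    have t1: "T1 \<le> t" using T3 t by simp
    have "\<bar>\<psi> t - 0\<bar> = (\<psi> t * (A t)\<^sup>2) * (1 / (A t)\<^sup>2)" using pts[OF t1] p by simp
    also have "\<dots> \<le> Cd * (6\<^sup>2 / t\<^sup>2)" using Cd(2)[OF t1] inv[OF t, of 2] Cd(1) pts[OF t1] p
      by (intro mult_mono) auto
    finally show "\<bar>\<psi> t - 0\<bar> \<le> 36 * Cd / t\<^sup>2" by (simp add: mult_ac)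
  qed
  have O1: "(\<lambda>t. \<phi> t - 2/3 - 9 * M / t\<^sup>2) \<in> O[at_top](\<lambda>t. 1 / t ^ 3)"
    by (rule bigO_from[OF fp_bound T3(2)])
  have O2: "(\<lambda>t. \<psi> t - 9 * exp L / t\<^sup>2) \<in> O[at_top](\<lambda>t. 1 / t ^ 3)"
    by (rule bigO_from[OF fm_bound T3(2)])
  have "9 * M \<noteq> 0" "9 * exp L \<noteq> 0" using M(1) by auto
  with lim1 lim2 O1 O2 show ?thesis by blast
qed

end


theorem mainTheorem5:
  fixes r A B :: "real \<Rightarrow> real" and t0 p m :: real
  assumes r_gt1: "\<forall>t>0. r t > 1"
    and r_lim: "(r \<longlongrightarrow> 1) (at_right 0)"
    and A_def: "\<forall>t>0. A t = r t / 3 * sqrt (1 - r t powr (-3))"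
    and B_def: "\<forall>t>0. B t = r t / sqrt 3"
    and A_ode: "\<forall>t>0. (A has_real_derivative (1/2) * (1 - (A t)\<^sup>2 / (B t)\<^sup>2)) (at t)"
    and B_ode: "\<forall>t>0. (B has_real_derivative A t / B t) (at t)"
    and t0_pos: "t0 > 0"
    and R0: "2/3 < p" "p < 1" "0 < m" "m < 1"
  shows "\<exists>fp fm :: real \<Rightarrow> real.
           fp t0 = p \<and> fm t0 = m \<and>
           instanton_sol A B fp fm {t0..} \<and>
           (\<forall>gp gm T. t0 < T \<longrightarrow> gp t0 = p \<longrightarrow> gm t0 = m \<longrightarrow>
               instanton_sol A B gp gm {t0..<T} \<longrightarrow>
               (\<forall>t\<in>{t0..<T}. gp t = fp t \<and> gm t = fm t)) \<and>
           (fp \<longlongrightarrow> 2/3) at_top \<and> (fm \<longlongrightarrow> 0) at_top \<and>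
           (\<exists>\<mu> \<nu> :: real. \<mu> \<noteq> 0 \<and> \<nu> \<noteq> 0 \<and>
              (\<lambda>t. fp t - 2/3 - \<mu> / t\<^sup>2) \<in> O[at_top](\<lambda>t. 1 / t ^ 3) \<and>
              (\<lambda>t. fm t - \<nu> / t\<^sup>2) \<in> O[at_top](\<lambda>t. 1 / t ^ 3))"
proof -
  note sf = setup_facts[OF r_gt1 A_def B_def A_ode B_ode]
  have Ad: "(A has_real_derivative 1/3 + epf A B t / 2) (at t)" if "t > 0" for t
  proof -
    have gen: "\<And>x::real. (1/2) * (1 - x) = 1/3 + (1/3 - x) / 2" by (simp add: field_simps)
    have "(1/2) * (1 - (A t)\<^sup>2 / (B t)\<^sup>2) = 1/3 + epf A B t / 2" unfolding epf_def by (rule gen)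
    then show ?thesis using A_ode that by metis
  qed
  interpret S: sysl A B t0
  proof
    show "t0 > 0" by fact
    fix t :: real assume t: "t > 0"
    show "A t > 0 \<and> B t > 0 \<and> 0 < epf A B t \<and> epf A B t < 1/3 \<and> epf A B t \<le> 1/(81 * A t ^ 3)"
      using sf(1) t unfolding epf_def by blast
    show "(A has_real_derivative 1/3 + epf A B t / 2) (at t)" by (rule Ad[OF t])
    show "(B has_real_derivative A t / B t) (at t)" using B_ode t by blast
  next
    fix s t :: real assume "0 < s" "s \<le> t"
    then show "epf A B t \<le> epf A B s" using sf(2) unfolding epf_def by blast
  qed
  obtain q where q: "p < q" "q < 1" "m\<^sup>2 < q" "1 - q \<le> 1/6"
    and Qc: "\<forall>e. 0 < e \<longrightarrow> e \<le> epf A B t0 \<longrightarrow> q * (2/3 + e - q) + m\<^sup>2 * (1/3 - e) \<le> 0"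
    using S.choose_q[OF R0(2) R0(3) R0(4)] by blast
  obtain \<phi> \<psi> where init: "\<phi> t0 = p" "\<psi> t0 = m"
    and der: "\<forall>t\<ge>t0. (\<phi> has_real_derivative S.G1 t (\<phi> t) (\<psi> t)) (at t within {t0..}) \<and>
                 (\<psi> has_real_derivative S.G2 t (\<phi> t) (\<psi> t)) (at t within {t0..})"
    using S.clamped_exists[of p m] by blast
  have inv: "\<forall>t\<ge>t0. 2/3 < \<phi> t \<and> \<phi> t < q \<and> 0 < \<psi> t \<and> \<psi> t \<le> m"
    by (rule S.invariance[OF R0 q(1-3) Qc init der])
  have GF: "S.G1 t (\<phi> t) (\<psi> t) = S.F1 t (\<phi> t) (\<psi> t) \<and> S.G2 t (\<phi> t) (\<psi> t) = S.F2 t (\<phi> t) (\<psi> t)" if "t \<ge> t0" for t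
    using inv that q R0 by (intro S.G_eq_F) auto
  have Frhs: "S.F1 t u v = fplus_rhs (A t) (B t) u v \<and> S.F2 t u v = fminus_rhs (A t) (B t) u v" if "t \<ge> t0" for t u v
    using S.fplus_eq[of t u v] S.fminus_eq[of t u v] that t0_pos unfolding S.F1_def S.F2_def by simp
  have solF: "\<forall>t\<ge>t0. (\<phi> has_real_derivative S.F1 t (\<phi> t) (\<psi> t)) (at t within {t0..}) \<and>
                 (\<psi> has_real_derivative S.F2 t (\<phi> t) (\<psi> t)) (at t within {t0..})"
    using der GF by metis
  have sol: "instanton_sol A B \<phi> \<psi> {t0..}"
    unfolding instanton_sol_def using solF Frhs by (metis atLeast_iff)
  have uniq: "\<forall>gp gm T. t0 < T \<longrightarrow> gp t0 = p \<longrightarrow> gm t0 = m \<longrightarrow>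
               instanton_sol A B gp gm {t0..<T} \<longrightarrow>
               (\<forall>t\<in>{t0..<T}. gp t = \<phi> t \<and> gm t = \<psi> t)"
  proof (intro allI impI ballI)
    fix gp gm T t assume "t0 < T" "gp t0 = p" "gm t0 = m" "instanton_sol A B gp gm {t0..<T}" "t \<in> {t0..<T}"
    then show "gp t = \<phi> t \<and> gm t = \<psi> t"
      using S.uniqueness[OF solF, of gp gm T t] init by simp
  qed
  interpret C: solctx A B t0 \<phi> \<psi> q
  proof
    fix t assume t: "t0 < t"
    have "(\<phi> has_real_derivative S.F1 t (\<phi> t) (\<psi> t)) (at t within {t0..})"
         "(\<psi> has_real_derivative S.F2 t (\<phi> t) (\<psi> t)) (at t within {t0..})" using solF t by auto
    then show "(\<phi> has_real_derivative S.F1 t (\<phi> t) (\<psi> t)) (at t)"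
      "(\<psi> has_real_derivative S.F2 t (\<phi> t) (\<psi> t)) (at t)" using S.within_to_at t by blast+
  next
    fix t assume "t0 \<le> t"
    then show "2/3 < \<phi> t \<and> \<phi> t < q \<and> 0 < \<psi> t \<and> \<psi> t < 1" using inv R0 by force
  next
    show "q < 1" "1 - q \<le> 1/6" using q by auto
  qed
  show ?thesis using C.final_asymp init sol uniq by blast
qed


end
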